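(* Let $p\in A^m$, $A=\mathbb C[t_1,\dots,t_n]$, with $p\neq0$, and let $R$ be a matrix over $\mathcal W_n$ whose rows generate $\ker(\kappa_p)$. Then the VMPUM $\{g\in C^\infty(\mathbb R^n,\mathbb C)^m: R\bullet g=0\}$ of $\{p\}$ equals $\{c\,p: c\in\mathbb C\}$; in particular it is a one-dimensional $\mathbb C$-vector space.
   Context: $\mathcal W_n$ is the $n$-th Weyl algebra $\mathbb C[t_1,\dots,t_n]\langle\partial_1,\dots,\partial_n\rangle$ with $\partial_it_j=t_j\partial_i+\delta_{ij}$, acting on $C^\infty(\mathbb R^n,\mathbb C)$ (which contains the polynomial functions $A$) by $\partial_i\bullet f=\partial f/\partial t_i$ and multiplication by $t_i$. For a matrix $R\in\mathcal W_n^{r\times m}$, $(R\bullet g)_i=\sum_jR_{ij}\bullet g_j$. For $p\in A^m$, $\ker(\kappa_p)=\{a\in\mathcal W_n^{1\times m}:\sum_ia_i\bullet p_i=0\}$. *)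

theory Defs
  imports "HOL-Analysis.Analysis"
begin

text \<open>An element of the Weyl algebra W_n is represented by its
(finitely supported) coefficient function in the normally ordered basis
t^alpha d^beta (coordinates first, derivatives to the right).\<close>

type_synonym 'n weyl = "('n \<Rightarrow> nat) \<times> ('n \<Rightarrow> nat) \<Rightarrow> complex"

definition weyl_elem :: "'n weyl \<Rightarrow> bool" where
  "weyl_elem a \<longleftrightarrow> finite {z. a z \<noteq> 0}"

text \<open>Normal ordering: d^beta t^gamma = sum over kappa of
  prod_i C(beta_i,kappa_i) C(gamma_i,kappa_i) kappa_i! t^(gamma-kappa) d^(beta-kappa).\<close>

definition weyl_coef :: "('n::finite \<Rightarrow> nat) \<Rightarrow> ('n \<Rightarrow> nat) \<Rightarrow> ('n \<Rightarrow> nat) \<Rightarrow> complex" where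
  "weyl_coef \<beta> \<gamma> \<kappa> = (\<Prod>i\<in>UNIV. of_nat ((\<beta> i choose \<kappa> i) * (\<gamma> i choose \<kappa> i) * fact (\<kappa> i)))"

definition weyl_mult :: "'n::finite weyl \<Rightarrow> 'n weyl \<Rightarrow> 'n weyl" where
  "weyl_mult a b = (\<lambda>(\<mu>, \<nu>).
     \<Sum>(\<alpha>, \<beta>, \<gamma>, \<delta>, \<kappa>) \<in> {(\<alpha>, \<beta>, \<gamma>, \<delta>, \<kappa>). a (\<alpha>, \<beta>) \<noteq> 0 \<and> b (\<gamma>, \<delta>) \<noteq> 0 \<and>
         (\<forall>i. \<kappa> i \<le> \<beta> i \<and> \<kappa> i \<le> \<gamma> i) \<and>
         \<mu> = (\<lambda>i. \<alpha> i + \<gamma> i - \<kappa> i) \<and> \<nu> = (\<lambda>i. \<beta> i + \<delta> i - \<kappa> i)}.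
       a (\<alpha>, \<beta>) * b (\<gamma>, \<delta>) * weyl_coef \<beta> \<gamma> \<kappa>)"

definition pdiff :: "'n::finite \<Rightarrow> ((real, 'n) vec \<Rightarrow> complex) \<Rightarrow> ((real, 'n) vec \<Rightarrow> complex)" where
  "pdiff i g = (\<lambda>x. vector_derivative (\<lambda>s::real. g (x + s *\<^sub>R axis i 1)) (at 0))"

definition pdiffs :: "'n::finite list \<Rightarrow> ((real, 'n) vec \<Rightarrow> complex) \<Rightarrow> ((real, 'n) vec \<Rightarrow> complex)" where
  "pdiffs is g = foldr pdiff is g"

definition smooth_fun :: "(real^('n::finite) \<Rightarrow> complex) \<Rightarrow> bool" where
  "smooth_fun g \<longleftrightarrow> (\<forall>is. continuous_on UNIV (pdiffs is g) \<and>
      (\<forall>i x. (\<lambda>s::real. pdiffs is g (x + s *\<^sub>R axis i 1)) differentiable (at 0)))"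

definition pdiff_multi :: "('n::{finite,linorder} \<Rightarrow> nat) \<Rightarrow> ((real, 'n) vec \<Rightarrow> complex) \<Rightarrow> ((real, 'n) vec \<Rightarrow> complex)" where
  "pdiff_multi \<beta> g = pdiffs (concat (map (\<lambda>i. replicate (\<beta> i) i) (sorted_list_of_set (UNIV::'n::{finite,linorder} set)))) g"

definition monom :: "('n::finite \<Rightarrow> nat) \<Rightarrow> (real, 'n) vec \<Rightarrow> complex" where
  "monom \<alpha> x = (\<Prod>i\<in>UNIV. complex_of_real (x $ i) ^ \<alpha> i)"

definition weyl_act :: "'n::{finite,linorder} weyl \<Rightarrow> ((real, 'n) vec \<Rightarrow> complex) \<Rightarrow> ((real, 'n) vec \<Rightarrow> complex)" where
  "weyl_act a g = (\<lambda>x. \<Sum>(\<alpha>, \<beta>) \<in> {z. a z \<noteq> 0}. a (\<alpha>, \<beta>) * monom \<alpha> x * pdiff_multi \<beta> g x)"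

definition poly_fun :: "(real^('n::finite) \<Rightarrow> complex) \<Rightarrow> bool" where
  "poly_fun f \<longleftrightarrow> (\<exists>c :: ('n \<Rightarrow> nat) \<Rightarrow> complex. finite {\<alpha>. c \<alpha> \<noteq> 0} \<and>
      f = (\<lambda>x. \<Sum>\<alpha>\<in>{\<alpha>. c \<alpha> \<noteq> 0}. c \<alpha> * monom \<alpha> x))"

definition ker_kappa :: "('m::finite \<Rightarrow> (real, 'n::{finite,linorder}) vec \<Rightarrow> complex) \<Rightarrow> ('m \<Rightarrow> 'n weyl) set" where
  "ker_kappa p = {a. (\<forall>j. weyl_elem (a j)) \<and> (\<lambda>x. \<Sum>j\<in>UNIV. weyl_act (a j) (p j) x) = (\<lambda>x. 0)}"

definition rows_generate :: "('r::finite \<Rightarrow> 'm::finite \<Rightarrow> 'n::{finite,linorder} weyl) \<Rightarrow> ('m \<Rightarrow> 'n weyl) set \<Rightarrow> bool" where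
  "rows_generate R M \<longleftrightarrow> (\<forall>k j. weyl_elem (R k j)) \<and>
     M = {a. \<exists>b :: 'r \<Rightarrow> 'n weyl. (\<forall>k. weyl_elem (b k)) \<and>
                a = (\<lambda>j z. \<Sum>k\<in>UNIV. weyl_mult (b k) (R k j) z)}"

end

theory Submission
  imports Defs
begin
definition linediff :: "(real^'n::finite \<Rightarrow> complex) \<Rightarrow> bool" where
  "linediff f \<longleftrightarrow> (\<forall>i x. (\<lambda>s::real. f (x + s *\<^sub>R axis i 1)) differentiable (at 0))"

lemma smooth_funD: "smooth_fun g \<Longrightarrow> continuous_on UNIV (pdiffs is g) \<and> linediff (pdiffs is g)"
  unfolding smooth_fun_def linediff_def by blast

lemma smooth_funI: "(\<And>is. continuous_on UNIV (pdiffs is g) \<and> linediff (pdiffs is g)) \<Longrightarrow> smooth_fun g"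
  unfolding smooth_fun_def linediff_def by blast

lemma pdiffs_Nil[simp]: "pdiffs [] g = g" by (simp add: pdiffs_def)
lemma pdiffs_Cons[simp]: "pdiffs (i#is) g = pdiff i (pdiffs is g)" by (simp add: pdiffs_def)
lemma pdiffs_append: "pdiffs (xs @ ys) g = pdiffs xs (pdiffs ys g)" by (simp add: pdiffs_def)

lemma smooth_linediff: "smooth_fun g \<Longrightarrow> linediff g"
  using smooth_funD[of g "[]"] by simp

lemma smooth_cont: "smooth_fun g \<Longrightarrow> continuous_on UNIV g"
  using smooth_funD[of g "[]"] by simp

lemma smooth_pdiff: "smooth_fun g \<Longrightarrow> smooth_fun (pdiff i g)"
  using smooth_funD[of g "_ @ [i]"] by (intro smooth_funI) (simp add: pdiffs_append)

lemma smooth_pdiffs: "smooth_fun g \<Longrightarrow> smooth_fun (pdiffs is g)"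
  by (induction "is") (auto intro: smooth_pdiff)

lemma pdiff_add: "linediff f \<Longrightarrow> linediff g \<Longrightarrow> pdiff i (\<lambda>x. f x + g x) = (\<lambda>x. pdiff i f x + pdiff i g x)"
  unfolding linediff_def pdiff_def by (simp add: vector_derivative_add_at)

lemma pdiff_mult: "linediff f \<Longrightarrow> linediff g \<Longrightarrow>
   pdiff i (\<lambda>x. f x * g x) = (\<lambda>x. f x * pdiff i g x + pdiff i f x * g x)"
  unfolding linediff_def pdiff_def by (simp add: vector_derivative_mult_at)

lemma pdiff_const: "pdiff i (\<lambda>x. c) = (\<lambda>x. 0)"
  unfolding pdiff_def by simp

lemma linediff_const: "linediff (\<lambda>x. c)"
  unfolding linediff_def by simp

lemma pdiff_cmult: "linediff f \<Longrightarrow> pdiff i (\<lambda>x. c * f x) = (\<lambda>x. c * pdiff i f x)"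
  using pdiff_mult[of "\<lambda>x. c" f i] by (simp add: linediff_const pdiff_const)

lemma linediff_add: "linediff f \<Longrightarrow> linediff g \<Longrightarrow> linediff (\<lambda>x. f x + g x)"
  unfolding linediff_def by simp

lemma linediff_mult: "linediff f \<Longrightarrow> linediff g \<Longrightarrow> linediff (\<lambda>x. f x * g x)"
  unfolding linediff_def by simp

lemma linediff_cmult: "linediff f \<Longrightarrow> linediff (\<lambda>x. c * f x)"
  using linediff_mult[OF linediff_const] by blast

lemma pdiffs_add:
  assumes "\<And>L. length L < length is \<Longrightarrow> linediff (pdiffs L f) \<and> linediff (pdiffs L g)"
  shows "pdiffs is (\<lambda>x. f x + g x) = (\<lambda>x. pdiffs is f x + pdiffs is g x)"
  using assms by (induction "is") (auto simp: pdiff_add)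

lemma pdiffs_cmult:
  assumes "\<And>L. length L < length is \<Longrightarrow> linediff (pdiffs L f)"
  shows "pdiffs is (\<lambda>x. c * f x) = (\<lambda>x. c * pdiffs is f x)"
  using assms by (induction "is") (auto simp: pdiff_cmult)

lemma smooth_add: "smooth_fun f \<Longrightarrow> smooth_fun g \<Longrightarrow> smooth_fun (\<lambda>x. f x + g x)"
proof (rule smooth_funI)
  fix "is"
  assume f: "smooth_fun f" and g: "smooth_fun g"
  have eq: "pdiffs is (\<lambda>x. f x + g x) = (\<lambda>x. pdiffs is f x + pdiffs is g x)"
    by (rule pdiffs_add) (simp add: smooth_funD[OF f] smooth_funD[OF g])
  show "continuous_on UNIV (pdiffs is (\<lambda>x. f x + g x)) \<and> linediff (pdiffs is (\<lambda>x. f x + g x))"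
    unfolding eq using smooth_funD[OF f, of "is"] smooth_funD[OF g, of "is"]
    by (simp add: continuous_on_add linediff_add)
qed

lemma smooth_cmult: "smooth_fun f \<Longrightarrow> smooth_fun (\<lambda>x. c * f x)"
proof (rule smooth_funI)
  fix "is"
  assume f: "smooth_fun f"
  have eq: "pdiffs is (\<lambda>x. c * f x) = (\<lambda>x. c * pdiffs is f x)"
    by (rule pdiffs_cmult) (simp add: smooth_funD[OF f])
  show "continuous_on UNIV (pdiffs is (\<lambda>x. c * f x)) \<and> linediff (pdiffs is (\<lambda>x. c * f x))"
    unfolding eq using smooth_funD[OF f, of "is"]
    by (simp add: continuous_on_mult_left linediff_cmult)
qed

lemma pdiffs_const: "pdiffs is (\<lambda>x. c) = (\<lambda>x. if is = [] then c else 0)"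
  by (induction "is") (auto simp: pdiff_const)

lemma smooth_const: "smooth_fun (\<lambda>x. c)"
  by (rule smooth_funI) (simp add: pdiffs_const linediff_const)

lemma smooth_sum: "finite S \<Longrightarrow> (\<And>k. k \<in> S \<Longrightarrow> smooth_fun (f k)) \<Longrightarrow> smooth_fun (\<lambda>x. \<Sum>k\<in>S. f k x)"
  by (induction S rule: finite_induct) (auto intro: smooth_add smooth_const)

lemma smooth_mult_aux:
  "\<forall>f g. smooth_fun f \<longrightarrow> smooth_fun g \<longrightarrow>
     continuous_on UNIV (pdiffs is (\<lambda>x. f x * g x)) \<and> linediff (pdiffs is (\<lambda>x. f x * g x))"
proof (induction "length is" arbitrary: "is" rule: less_induct)
  case less
  show ?case
  proof (cases "is" rule: rev_cases)
    case Nil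
    show ?thesis
    proof (intro allI impI)
      fix f g :: "real^'a \<Rightarrow> complex"
      assume f: "smooth_fun f" and g: "smooth_fun g"
      show "continuous_on UNIV (pdiffs is (\<lambda>x. f x * g x)) \<and> linediff (pdiffs is (\<lambda>x. f x * g x))"
        unfolding Nil pdiffs_Nil
        using smooth_cont[OF f] smooth_cont[OF g] smooth_linediff[OF f] smooth_linediff[OF g]
        by (simp add: continuous_on_mult linediff_mult)
    qed
  next
    case (snoc js i)
    have IH: "continuous_on UNIV (pdiffs L (\<lambda>x. f x * g x)) \<and> linediff (pdiffs L (\<lambda>x. f x * g x))"
      if "length L \<le> length js" "smooth_fun f" "smooth_fun g" for L :: "'a list" and f g
    proof -
      have "length L < length is" using that(1) snoc by simp
      then show ?thesis using less(1) that(2,3) by blast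
    qed
    show ?thesis
    proof (intro allI impI)
      fix f g :: "real^'a \<Rightarrow> complex"
      assume f: "smooth_fun f" and g: "smooth_fun g"
      have f': "smooth_fun (pdiff i f)" and g': "smooth_fun (pdiff i g)"
        using f g by (simp_all add: smooth_pdiff)
      have eq: "pdiffs is (\<lambda>x. f x * g x) = (\<lambda>x. pdiffs js (\<lambda>x. f x * pdiff i g x) x + pdiffs js (\<lambda>x. pdiff i f x * g x) x)"
      proof -
        have "pdiffs is (\<lambda>x. f x * g x) = pdiffs js (\<lambda>x. f x * pdiff i g x + pdiff i f x * g x)"
          unfolding snoc pdiffs_append by (simp add: pdiff_mult f g smooth_linediff)
        also have "\<dots> = (\<lambda>x. pdiffs js (\<lambda>x. f x * pdiff i g x) x + pdiffs js (\<lambda>x. pdiff i f x * g x) x)"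
          by (rule pdiffs_add) (simp add: IH f g f' g')
        finally show ?thesis .
      qed
      have "continuous_on UNIV (pdiffs js (\<lambda>x. f x * pdiff i g x)) \<and> linediff (pdiffs js (\<lambda>x. f x * pdiff i g x))"
           "continuous_on UNIV (pdiffs js (\<lambda>x. pdiff i f x * g x)) \<and> linediff (pdiffs js (\<lambda>x. pdiff i f x * g x))"
        using IH f g f' g' by auto
      then show "continuous_on UNIV (pdiffs is (\<lambda>x. f x * g x)) \<and> linediff (pdiffs is (\<lambda>x. f x * g x))"
        unfolding eq by (simp add: continuous_on_add linediff_add)
    qed
  qed
qed

lemma smooth_mult: "smooth_fun f \<Longrightarrow> smooth_fun g \<Longrightarrow> smooth_fun (\<lambda>x. f x * g x)"
  using smooth_mult_aux by (blast intro: smooth_funI)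

lemma smooth_prod: "finite S \<Longrightarrow> (\<And>k. k \<in> S \<Longrightarrow> smooth_fun (f k)) \<Longrightarrow> smooth_fun (\<lambda>x. \<Prod>k\<in>S. f k x)"
  by (induction S rule: finite_induct) (auto intro: smooth_mult smooth_const)

lemma smooth_power: "smooth_fun f \<Longrightarrow> smooth_fun (\<lambda>x. f x ^ k)"
  by (induction k) (auto intro: smooth_mult smooth_const)

lemma line_nth: "(x + s *\<^sub>R axis i 1)$j = x$j + (if j = i then s else 0)"
  by (simp add: axis_def)

lemma coord_line_deriv:
  "((\<lambda>s. complex_of_real ((x + s *\<^sub>R axis i 1)$j)) has_vector_derivative (if j = i then 1 else 0)) (at t)"
proof -
  have "((\<lambda>s. complex_of_real (x$j + (if j = i then s else 0))) has_vector_derivative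
        complex_of_real (if j = i then 1 else 0)) (at t)"
    by (rule has_vector_derivative_of_real) (auto intro!: derivative_eq_intros)
  moreover have "(\<lambda>s. complex_of_real ((x + s *\<^sub>R axis i 1)$j)) = (\<lambda>s. complex_of_real (x$j + (if j = i then s else 0)))"
    by (rule ext) (simp only: line_nth)
  ultimately show ?thesis by (cases "j = i") auto
qed

lemma pdiff_coord: "pdiff i (\<lambda>x. complex_of_real (x$j)) = (\<lambda>x. if j = i then 1 else 0)"
  unfolding pdiff_def using coord_line_deriv vector_derivative_at by blast

lemma linediff_coord: "linediff (\<lambda>x. complex_of_real (x$j))"
  unfolding linediff_def using coord_line_deriv differentiableI_vector by blast

lemma pdiffs_coord: "pdiffs is (\<lambda>x. complex_of_real (x$j)) = (\<lambda>x. complex_of_real (x$j)) \<or>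
   (\<exists>c. pdiffs is (\<lambda>x. complex_of_real (x$j)) = (\<lambda>x. c))"
proof (induction "is")
  case Nil then show ?case by simp
next
  case (Cons i "is")
  then show ?case
  proof
    assume "pdiffs is (\<lambda>x. complex_of_real (x$j)) = (\<lambda>x. complex_of_real (x$j))"
    then show ?thesis by (intro disjI2 exI[of _ "if j = i then 1 else 0"]) (simp add: pdiff_coord)
  next
    assume "\<exists>c. pdiffs is (\<lambda>x. complex_of_real (x$j)) = (\<lambda>x. c)"
    then show ?thesis by (auto simp: pdiff_const)
  qed
qed

lemma smooth_coord: "smooth_fun (\<lambda>x. complex_of_real (x$j))"
proof (rule smooth_funI)
  fix "is" :: "'a list"
  show "continuous_on UNIV (pdiffs is (\<lambda>x. complex_of_real (x $ j))) \<and> linediff (pdiffs is (\<lambda>x. complex_of_real (x $ j)))"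
    using pdiffs_coord[of "is" j]
  proof
    assume e: "pdiffs is (\<lambda>x. complex_of_real (x$j)) = (\<lambda>x. complex_of_real (x$j))"
    show ?thesis unfolding e by (auto intro!: continuous_intros simp: linediff_coord)
  next
    assume "\<exists>c. pdiffs is (\<lambda>x. complex_of_real (x$j)) = (\<lambda>x. c)"
    then obtain c where e: "pdiffs is (\<lambda>x. complex_of_real (x$j)) = (\<lambda>x. c)" by blast
    show ?thesis unfolding e by (auto simp: linediff_const)
  qed
qed

lemma smooth_monom: "smooth_fun (monom \<alpha>)"
proof -
  have "monom \<alpha> = (\<lambda>x. \<Prod>i\<in>UNIV. complex_of_real (x$i) ^ \<alpha> i)"
    by (simp add: monom_def fun_eq_iff)
  then show ?thesis
    by (simp add: smooth_prod smooth_power smooth_coord)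
qed

lemma monom_split: "monom \<alpha> y = complex_of_real (y$i)^(\<alpha> i) * (\<Prod>j\<in>UNIV-{i}. complex_of_real (y$j)^(\<alpha> j))"
  unfolding monom_def by (simp add: prod.remove)

lemma pdiff_monom: "pdiff i (monom \<alpha>) = (\<lambda>x. of_nat (\<alpha> i) * monom (\<alpha>(i := \<alpha> i - 1)) x)"
proof (rule ext)
  fix x :: "real^'a"
  define C where "C = (\<Prod>j\<in>UNIV-{i}. complex_of_real (x$j)^(\<alpha> j))"
  have C: "(\<Prod>j\<in>UNIV-{i}. complex_of_real ((x + s *\<^sub>R axis i 1)$j)^(\<alpha> j)) = C" for s
    unfolding C_def by (rule prod.cong) (auto simp del: vector_add_component vector_scaleR_component simp add: line_nth)
  have line: "(\<lambda>s. monom \<alpha> (x + s *\<^sub>R axis i 1)) = (\<lambda>s. complex_of_real ((x$i + s)^(\<alpha> i)) * C)"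
    by (rule ext) (subst monom_split[of \<alpha> _ i], subst C, simp only: line_nth, simp)
  have "((\<lambda>s. complex_of_real ((x$i + s)^(\<alpha> i)) * C) has_vector_derivative
        (complex_of_real (of_nat (\<alpha> i) * (x$i + 0)^(\<alpha> i - 1)) * C)) (at 0)"
  proof -
    have d1: "((\<lambda>s. (x$i + s)^(\<alpha> i)) has_real_derivative (of_nat (\<alpha> i) * (x$i + 0)^(\<alpha> i - 1))) (at 0)"
      by (auto intro!: derivative_eq_intros)
    from has_vector_derivative_mult[OF has_vector_derivative_of_real[OF d1] has_vector_derivative_const[of C]]
    show ?thesis by simp
  qed
  then have "pdiff i (monom \<alpha>) x = complex_of_real (of_nat (\<alpha> i) * (x$i)^(\<alpha> i - 1)) * C"
    unfolding pdiff_def line using vector_derivative_at by fastforce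
  also have "\<dots> = of_nat (\<alpha> i) * monom (\<alpha>(i := \<alpha> i - 1)) x"
    by (simp add: monom_split[of _ x i] C_def)
  finally show "pdiff i (monom \<alpha>) x = of_nat (\<alpha> i) * monom (\<alpha>(i := \<alpha> i - 1)) x" .
qed

lemma smooth_poly_fun: "poly_fun f \<Longrightarrow> smooth_fun f"
  unfolding poly_fun_def by (auto intro!: smooth_sum smooth_cmult smooth_monom)

lemma line_deriv:
  assumes "smooth_fun h"
  shows "((\<lambda>\<sigma>. h (y + \<sigma> *\<^sub>R axis a 1)) has_vector_derivative pdiff a h (y + t *\<^sub>R axis a 1)) (at t)"
proof -
  define z where "z = y + t *\<^sub>R axis a 1"
  have "(\<lambda>s. h (z + s *\<^sub>R axis a 1)) differentiable (at 0)"
    using smooth_linediff[OF assms] unfolding linediff_def by blast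
  then have d0: "((\<lambda>s. h (z + s *\<^sub>R axis a 1)) has_vector_derivative pdiff a h z) (at 0)"
    unfolding pdiff_def using vector_derivative_works by blast
  have df: "((\<lambda>\<sigma>. \<sigma> - t) has_vector_derivative 1) (at t)"
    by (auto intro!: derivative_eq_intros simp: has_real_derivative_iff_has_vector_derivative[symmetric])
  have "(((\<lambda>s. h (z + s *\<^sub>R axis a 1)) \<circ> (\<lambda>\<sigma>. \<sigma> - t)) has_vector_derivative (1 *\<^sub>R pdiff a h z)) (at t)"
    by (rule vector_diff_chain_at[OF df]) (simp add: d0)
  moreover have "((\<lambda>s. h (z + s *\<^sub>R axis a 1)) \<circ> (\<lambda>\<sigma>. \<sigma> - t)) = (\<lambda>\<sigma>. h (y + \<sigma> *\<^sub>R axis a 1))"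
    by (rule ext) (simp add: z_def algebra_simps)
  ultimately show ?thesis by (simp add: z_def)
qed

lemma re_mvt:
  assumes "0 < s" "\<And>\<sigma>. (f has_vector_derivative f' \<sigma>) (at \<sigma>)"
  shows "\<exists>\<xi>. 0 < \<xi> \<and> \<xi> < s \<and> Re (w * f s) - Re (w * f 0) = s * Re (w * f' \<xi>)"
proof -
  have "DERIV (\<lambda>\<sigma>. Re (w * f \<sigma>)) \<sigma> :> Re (w * f' \<sigma>)" for \<sigma>
  proof -
    have "((\<lambda>\<sigma>. w * f \<sigma>) has_vector_derivative (w * f' \<sigma> + 0 * f \<sigma>)) (at \<sigma>)"
      by (rule has_vector_derivative_mult[OF has_vector_derivative_const assms(2)])
    then show ?thesis using has_field_derivative_Re by fastforce
  qed
  from MVT2[OF assms(1) this] show ?thesis by auto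
qed

lemma re_diff: "Re (w * (a - b)) = Re (w * a) - Re (w * b)"
  by (simp add: right_diff_distrib)

lemma schwarz_re:
  assumes h: "smooth_fun h" and "0 < s"
  shows "\<exists>\<xi> \<eta> \<xi>' \<eta>'. 0 < \<xi> \<and> \<xi> < s \<and> 0 < \<eta> \<and> \<eta> < s \<and> 0 < \<xi>' \<and> \<xi>' < s \<and> 0 < \<eta>' \<and> \<eta>' < s \<and>
    Re (w * pdiff b (pdiff a h) (x + \<xi> *\<^sub>R axis a 1 + \<eta> *\<^sub>R axis b 1)) =
    Re (w * pdiff a (pdiff b h) (x + \<xi>' *\<^sub>R axis a 1 + \<eta>' *\<^sub>R axis b 1))"
proof -
  define P where "P \<sigma> \<tau> = x + \<sigma> *\<^sub>R axis a 1 + \<tau> *\<^sub>R axis b 1" for \<sigma> \<tau>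
  have Pa: "P \<sigma> \<tau> = (x + \<tau> *\<^sub>R axis b 1) + \<sigma> *\<^sub>R axis a 1" for \<sigma> \<tau> by (simp add: P_def algebra_simps)
  have Pb: "P \<sigma> \<tau> = (x + \<sigma> *\<^sub>R axis a 1) + \<tau> *\<^sub>R axis b 1" for \<sigma> \<tau> by (simp add: P_def)
  have da: "((\<lambda>\<sigma>. g (P \<sigma> \<tau>)) has_vector_derivative pdiff a g (P \<sigma>0 \<tau>)) (at \<sigma>0)" if "smooth_fun g" for g \<sigma>0 \<tau>
    unfolding Pa by (rule line_deriv[OF that])
  have db: "((\<lambda>\<tau>. g (P \<sigma> \<tau>)) has_vector_derivative pdiff b g (P \<sigma> \<tau>0)) (at \<tau>0)" if "smooth_fun g" for g \<sigma> \<tau>0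
    unfolding Pb by (rule line_deriv[OF that])
  have hA: "smooth_fun (pdiff a h)" and hB: "smooth_fun (pdiff b h)" using h smooth_pdiff by auto
  define D where "D = h (P s s) - h (P s 0) - h (P 0 s) + h (P 0 0)"
  have "\<exists>\<xi>. 0 < \<xi> \<and> \<xi> < s \<and> Re (w * (h (P s s) - h (P s 0))) - Re (w * (h (P 0 s) - h (P 0 0))) =
          s * Re (w * (pdiff a h (P \<xi> s) - pdiff a h (P \<xi> 0)))"
    by (rule re_mvt[OF \<open>0 < s\<close>, of "\<lambda>\<sigma>. h (P \<sigma> s) - h (P \<sigma> 0)"])
       (intro has_vector_derivative_diff da h)
  moreover have D1: "Re (w * D) = Re (w * (h (P s s) - h (P s 0))) - Re (w * (h (P 0 s) - h (P 0 0)))"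
    unfolding re_diff[symmetric] D_def by (simp add: algebra_simps)
  ultimately obtain \<xi> where \<xi>: "0 < \<xi>" "\<xi> < s"
    "Re (w * D) = s * (Re (w * pdiff a h (P \<xi> s)) - Re (w * pdiff a h (P \<xi> 0)))"
    unfolding re_diff by auto
  have "\<exists>\<eta>. 0 < \<eta> \<and> \<eta> < s \<and> Re (w * pdiff a h (P \<xi> s)) - Re (w * pdiff a h (P \<xi> 0)) =
          s * Re (w * pdiff b (pdiff a h) (P \<xi> \<eta>))"
    by (rule re_mvt[OF \<open>0 < s\<close>]) (rule db[OF hA])
  then obtain \<eta> where \<eta>: "0 < \<eta>" "\<eta> < s"
    "Re (w * D) = s * (s * Re (w * pdiff b (pdiff a h) (P \<xi> \<eta>)))"
    using \<xi>(3) by auto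
  have "\<exists>\<eta>'. 0 < \<eta>' \<and> \<eta>' < s \<and> Re (w * (h (P s s) - h (P 0 s))) - Re (w * (h (P s 0) - h (P 0 0))) =
          s * Re (w * (pdiff b h (P s \<eta>') - pdiff b h (P 0 \<eta>')))"
    by (rule re_mvt[OF \<open>0 < s\<close>, of "\<lambda>\<tau>. h (P s \<tau>) - h (P 0 \<tau>)"])
       (intro has_vector_derivative_diff db h)
  moreover have D2: "Re (w * D) = Re (w * (h (P s s) - h (P 0 s))) - Re (w * (h (P s 0) - h (P 0 0)))"
    unfolding re_diff[symmetric] D_def by (simp add: algebra_simps)
  ultimately obtain \<eta>' where \<eta>': "0 < \<eta>'" "\<eta>' < s"
    "Re (w * D) = s * (Re (w * pdiff b h (P s \<eta>')) - Re (w * pdiff b h (P 0 \<eta>')))"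
    unfolding re_diff by auto
  have "\<exists>\<xi>'. 0 < \<xi>' \<and> \<xi>' < s \<and> Re (w * pdiff b h (P s \<eta>')) - Re (w * pdiff b h (P 0 \<eta>')) =
          s * Re (w * pdiff a (pdiff b h) (P \<xi>' \<eta>'))"
    by (rule re_mvt[OF \<open>0 < s\<close>]) (rule da[OF hB])
  then obtain \<xi>' where \<xi>': "0 < \<xi>'" "\<xi>' < s"
    "Re (w * D) = s * (s * Re (w * pdiff a (pdiff b h) (P \<xi>' \<eta>')))"
    using \<eta>'(3) by auto
  have "Re (w * pdiff b (pdiff a h) (P \<xi> \<eta>)) = Re (w * pdiff a (pdiff b h) (P \<xi>' \<eta>'))"
    using \<eta>(3) \<xi>'(3) \<open>0 < s\<close> by simp
  then show ?thesis unfolding P_def using \<xi> \<eta> \<xi>' \<eta>' by blast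
qed

lemma dist_P: "dist (x + \<xi> *\<^sub>R axis a 1 + \<eta> *\<^sub>R axis b (1::real)) x \<le> \<bar>\<xi>\<bar> + \<bar>\<eta>\<bar>"
proof -
  have "dist (x + \<xi> *\<^sub>R axis a 1 + \<eta> *\<^sub>R axis b (1::real)) x = norm (\<xi> *\<^sub>R axis a (1::real) + \<eta> *\<^sub>R axis b 1)"
    by (simp add: dist_norm)
  also have "\<dots> \<le> norm (\<xi> *\<^sub>R axis a (1::real)) + norm (\<eta> *\<^sub>R axis b (1::real))"
    by (rule norm_triangle_ineq)
  finally show ?thesis by simp
qed

lemma schwarz_re_eq:
  assumes h: "smooth_fun h"
  shows "Re (w * pdiff b (pdiff a h) x) = Re (w * pdiff a (pdiff b h) x)"
proof (rule ccontr)
  define G1 where "G1 y = Re (w * pdiff b (pdiff a h) y)" for y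
  define G2 where "G2 y = Re (w * pdiff a (pdiff b h) y)" for y
  have c1: "continuous_on UNIV G1" unfolding G1_def
    using smooth_cont[OF smooth_pdiff[OF smooth_pdiff[OF h]]] by (intro continuous_intros)
  have c2: "continuous_on UNIV G2" unfolding G2_def
    using smooth_cont[OF smooth_pdiff[OF smooth_pdiff[OF h]]] by (intro continuous_intros)
  assume "Re (w * pdiff b (pdiff a h) x) \<noteq> Re (w * pdiff a (pdiff b h) x)"
  then have ne: "G1 x \<noteq> G2 x" by (simp add: G1_def G2_def)
  define e where "e = \<bar>G1 x - G2 x\<bar> / 2"
  have e: "e > 0" using ne by (simp add: e_def)
  obtain d1 where d1: "d1 > 0" "\<And>y. dist y x < d1 \<Longrightarrow> dist (G1 y) (G1 x) < e"
    using c1 e unfolding continuous_on_iff by blast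
  obtain d2 where d2: "d2 > 0" "\<And>y. dist y x < d2 \<Longrightarrow> dist (G2 y) (G2 x) < e"
    using c2 e unfolding continuous_on_iff by blast
  define s where "s = min d1 d2 / 2"
  have s: "s > 0" using d1 d2 by (simp add: s_def)
  have sd: "s \<le> d1 / 2" "s \<le> d2 / 2" by (auto simp: s_def)
  obtain \<xi> \<eta> \<xi>' \<eta>' where pts: "0 < \<xi>" "\<xi> < s" "0 < \<eta>" "\<eta> < s" "0 < \<xi>'" "\<xi>' < s" "0 < \<eta>'" "\<eta>' < s"
    and eq: "G1 (x + \<xi> *\<^sub>R axis a 1 + \<eta> *\<^sub>R axis b 1) = G2 (x + \<xi>' *\<^sub>R axis a 1 + \<eta>' *\<^sub>R axis b 1)"
    using schwarz_re[OF h s, of w b a x] unfolding G1_def G2_def by blast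
  have "dist (x + \<xi> *\<^sub>R axis a 1 + \<eta> *\<^sub>R axis b 1) x < d1"
    using dist_P[of x \<xi> a \<eta> b] pts sd abs_of_pos[of \<xi>] abs_of_pos[of \<eta>] by linarith
  then have 1: "dist (G1 (x + \<xi> *\<^sub>R axis a 1 + \<eta> *\<^sub>R axis b 1)) (G1 x) < e" by (rule d1)
  have "dist (x + \<xi>' *\<^sub>R axis a 1 + \<eta>' *\<^sub>R axis b 1) x < d2"
    using dist_P[of x \<xi>' a \<eta>' b] pts sd abs_of_pos[of \<xi>'] abs_of_pos[of \<eta>'] by linarith
  then have 2: "dist (G2 (x + \<xi>' *\<^sub>R axis a 1 + \<eta>' *\<^sub>R axis b 1)) (G2 x) < e" by (rule d2)
  have aux: "\<And>u v A B::real. \<bar>u - A\<bar> < \<bar>A - B\<bar> / 2 \<Longrightarrow> \<bar>v - B\<bar> < \<bar>A - B\<bar> / 2 \<Longrightarrow> u = v \<Longrightarrow> False"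
    by (simp add: abs_if split: if_splits)
  from 1 2 eq show False unfolding e_def dist_real_def by (rule aux)
qed

lemma pdiff_commute:
  assumes h: "smooth_fun h"
  shows "pdiff a (pdiff b h) = pdiff b (pdiff a h)"
proof (rule ext, rule complex_eqI)
  fix x
  show "Re (pdiff a (pdiff b h) x) = Re (pdiff b (pdiff a h) x)"
    using schwarz_re_eq[OF h, of 1 b a x] by simp
  show "Im (pdiff a (pdiff b h) x) = Im (pdiff b (pdiff a h) x)"
    using schwarz_re_eq[OF h, of "-\<i>" b a x] by simp
qed

lemma pdiffs_swap: "smooth_fun g \<Longrightarrow> pdiffs (xs @ a # b # ys) g = pdiffs (xs @ b # a # ys) g"
  by (simp add: pdiffs_append pdiff_commute smooth_pdiffs)

lemma pdiffs_move_front: "smooth_fun g \<Longrightarrow> pdiffs (xs @ a # ys) g = pdiffs (a # xs @ ys) g"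
proof (induction xs)
  case Nil then show ?case by simp
next
  case (Cons x xs)
  have "pdiffs ((x # xs) @ a # ys) g = pdiff x (pdiffs (a # xs @ ys) g)"
    using Cons by simp
  also have "\<dots> = pdiffs ([] @ x # a # (xs @ ys)) g" by simp
  also have "\<dots> = pdiffs ([] @ a # x # (xs @ ys)) g" by (rule pdiffs_swap[OF Cons.prems])
  finally show ?case by simp
qed

lemma pdiffs_mset: "smooth_fun g \<Longrightarrow> mset L1 = mset L2 \<Longrightarrow> pdiffs L1 g = pdiffs L2 g"
proof (induction L1 arbitrary: L2)
  case Nil then show ?case by simp
next
  case (Cons a L1)
  have "a \<in> set L2" using Cons.prems(2) by (metis list.set_intros(1) set_mset_mset)
  then obtain xs ys where L2: "L2 = xs @ a # ys" by (meson split_list)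
  have "mset L1 = mset (xs @ ys)" using Cons.prems(2) L2 by simp
  then have "pdiffs L1 g = pdiffs (xs @ ys) g" using Cons by blast
  then have "pdiffs (a # L1) g = pdiffs (a # xs @ ys) g" by simp
  also have "\<dots> = pdiffs L2 g" unfolding L2 by (rule pdiffs_move_front[OF Cons.prems(1), symmetric])
  finally show ?case .
qed

definition mlist :: "('n::{finite,linorder} \<Rightarrow> nat) \<Rightarrow> 'n list" where
  "mlist \<beta> = concat (map (\<lambda>i. replicate (\<beta> i) i) (sorted_list_of_set (UNIV::'n set)))"

lemma pdiff_multi_mlist: "pdiff_multi \<beta> g = pdiffs (mlist \<beta>) g"
  by (simp add: pdiff_multi_def mlist_def)

lemma count_concat_rep: "distinct xs \<Longrightarrow>
  count (mset (concat (map (\<lambda>i. replicate (\<beta> i) i) xs))) j = (if j \<in> set xs then \<beta> j else 0)"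
  by (induction xs) auto

lemma count_mlist: "count (mset (mlist \<beta>)) j = \<beta> j"
  unfolding mlist_def by (subst count_concat_rep) auto

lemma mset_mlist_eq: "(\<And>j. count (mset L) j = \<beta> j) \<Longrightarrow> mset L = mset (mlist \<beta>)"
  by (simp_all add: multiset_eq_iff count_mlist)

lemma concat_map_Nil: "concat (map (\<lambda>i. []) xs) = []"
  by (induction xs) auto

lemma pdiff_multi_zero: "pdiff_multi (\<lambda>_. 0) g = g"
  by (simp add: pdiff_multi_def concat_map_Nil)

lemma smooth_pdiff_multi: "smooth_fun g \<Longrightarrow> smooth_fun (pdiff_multi \<beta> g)"
  by (simp add: pdiff_multi_mlist smooth_pdiffs)

lemma pdiff_multi_add: "smooth_fun g \<Longrightarrow>
  pdiff_multi \<mu> (pdiff_multi \<nu> g) = pdiff_multi (\<lambda>i. \<mu> i + \<nu> i) g"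
  unfolding pdiff_multi_mlist pdiffs_append[symmetric]
  by (rule pdiffs_mset) (simp_all add: multiset_eq_iff count_mlist)

lemma pdiff_pdiff_multi: "smooth_fun g \<Longrightarrow>
  pdiff i (pdiff_multi \<beta> g) = pdiff_multi (\<beta>(i := Suc (\<beta> i))) g"
  unfolding pdiff_multi_mlist pdiffs_Cons[symmetric]
  by (rule pdiffs_mset) (simp_all add: multiset_eq_iff count_mlist)

lemma finite_KS: "finite {\<kappa>::'n::finite \<Rightarrow> nat. \<forall>i. \<kappa> i \<le> \<beta> i}"
proof -
  have "{\<kappa>::'n \<Rightarrow> nat. \<forall>i. \<kappa> i \<le> \<beta> i} = PiE UNIV (\<lambda>i. {..\<beta> i})"
    by (auto simp: PiE_UNIV_domain Pi_def)
  then show ?thesis by (simp add: finite_PiE)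
qed

lemma linediff_sum: "finite S \<Longrightarrow> (\<And>k. k \<in> S \<Longrightarrow> linediff (f k)) \<Longrightarrow> linediff (\<lambda>x. \<Sum>k\<in>S. f k x)"
  by (induction S rule: finite_induct) (auto intro: linediff_add linediff_const)

lemma pdiff_sum: "finite S \<Longrightarrow> (\<And>k. k \<in> S \<Longrightarrow> linediff (f k)) \<Longrightarrow>
   pdiff i (\<lambda>x. \<Sum>k\<in>S. f k x) = (\<lambda>x. \<Sum>k\<in>S. pdiff i (f k) x)"
proof (induction S rule: finite_induct)
  case empty then show ?case by (simp add: pdiff_const)
next
  case (insert a S)
  have "pdiff i (\<lambda>x. \<Sum>k\<in>insert a S. f k x) = pdiff i (\<lambda>x. f a x + (\<Sum>k\<in>S. f k x))"
    using insert by simp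
  also have "\<dots> = (\<lambda>x. pdiff i (f a) x + pdiff i (\<lambda>x. \<Sum>k\<in>S. f k x) x)"
    using insert by (intro pdiff_add linediff_sum) auto
  finally show ?case using insert by simp
qed

lemma pdiff_monom_mult: "smooth_fun h \<Longrightarrow> pdiff i (\<lambda>x. monom \<mu> x * h x) =
   (\<lambda>x. monom \<mu> x * pdiff i h x + of_nat (\<mu> i) * monom (\<mu>(i := \<mu> i - 1)) x * h x)"
  by (simp add: pdiff_mult smooth_linediff smooth_monom pdiff_monom)

lemma choose_fact_Suc: "(g choose Suc k) * fact (Suc k) = (g choose k) * fact k * (g - k)"
proof -
  have "(g choose Suc k) * Suc k = (g choose k) * (g - k)"
    using binomial_absorption[of k g] binomial_absorb_comp[of g k] by (simp add: mult.commute)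
  have "(g choose Suc k) * fact (Suc k) = ((g choose Suc k) * Suc k) * fact k"
    by (simp add: fact_Suc algebra_simps)
  also have "\<dots> = (g choose k) * (g - k) * fact k" using \<open>(g choose Suc k) * Suc k = _\<close> by simp
  finally show ?thesis by (simp add: ac_simps)
qed

lemma coef_scalar: "((Suc b choose k) * (g choose k) * fact k :: nat) =
   (b choose k) * (g choose k) * fact k + (if 0 < k then (b choose (k - 1)) * (g choose (k - 1)) * fact (k - 1) * (g - (k - 1)) else 0)"
proof (cases k)
  case 0 then show ?thesis by simp
next
  case (Suc k')
  have "(Suc b choose k) * (g choose k) * fact k = (b choose k') * ((g choose Suc k') * fact (Suc k')) + (b choose k) * (g choose k) * fact k"
    by (simp add: Suc algebra_simps del: fact_Suc)
  also have "\<dots> = (b choose k') * ((g choose k') * fact k' * (g - k')) + (b choose k) * (g choose k) * fact k"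
    by (simp only: choose_fact_Suc)
  finally show ?thesis by (simp add: Suc algebra_simps del: fact_Suc)
qed

lemma coef_step:
  fixes \<beta>' :: "'n::finite \<Rightarrow> nat"
  shows "weyl_coef (\<beta>'(i := Suc (\<beta>' i))) \<gamma> \<kappa> = weyl_coef \<beta>' \<gamma> \<kappa> +
    (if 0 < \<kappa> i then weyl_coef \<beta>' \<gamma> (\<kappa>(i := \<kappa> i - 1)) * of_nat (\<gamma> i - (\<kappa> i - 1)) else 0)"
proof -
  define R where "R = (\<Prod>j\<in>UNIV-{i}. (of_nat ((\<beta>' j choose \<kappa> j) * (\<gamma> j choose \<kappa> j) * fact (\<kappa> j)) :: complex))"
  have split: "weyl_coef b \<gamma> k = of_nat ((b i choose k i) * (\<gamma> i choose k i) * fact (k i)) * R"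
    if "\<And>j. j \<noteq> i \<Longrightarrow> b j = \<beta>' j" "\<And>j. j \<noteq> i \<Longrightarrow> k j = \<kappa> j" for b k
  proof -
    have "weyl_coef b \<gamma> k = of_nat ((b i choose k i) * (\<gamma> i choose k i) * fact (k i)) *
        (\<Prod>j\<in>UNIV-{i}. (of_nat ((b j choose k j) * (\<gamma> j choose k j) * fact (k j)) :: complex))"
      unfolding weyl_coef_def by (simp add: prod.remove)
    also have "(\<Prod>j\<in>UNIV-{i}. (of_nat ((b j choose k j) * (\<gamma> j choose k j) * fact (k j)) :: complex)) = R"
      unfolding R_def by (rule prod.cong) (auto simp: that)
    finally show ?thesis .
  qed
  have e1: "weyl_coef (\<beta>'(i := Suc (\<beta>' i))) \<gamma> \<kappa> = of_nat ((Suc (\<beta>' i) choose \<kappa> i) * (\<gamma> i choose \<kappa> i) * fact (\<kappa> i)) * R"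
    by (subst split) auto
  have e2: "weyl_coef \<beta>' \<gamma> \<kappa> = of_nat ((\<beta>' i choose \<kappa> i) * (\<gamma> i choose \<kappa> i) * fact (\<kappa> i)) * R"
    by (subst split) auto
  have e3: "weyl_coef \<beta>' \<gamma> (\<kappa>(i := \<kappa> i - 1)) = of_nat ((\<beta>' i choose (\<kappa> i - 1)) * (\<gamma> i choose (\<kappa> i - 1)) * fact (\<kappa> i - 1)) * R"
    by (subst split) auto
  show ?thesis
  proof (cases "0 < \<kappa> i")
    case True
    show ?thesis unfolding e1 e2 e3 coef_scalar
      by (simp only: True if_True of_nat_add of_nat_mult distrib_right distrib_left ac_simps)
  next
    case False
    show ?thesis unfolding e1 e2 e3 coef_scalar
      by (simp only: False if_False add_0_right)
  qed
qed

lemma smooth_monom_mult: "smooth_fun h \<Longrightarrow> smooth_fun (\<lambda>x. monom \<gamma> x * h x)"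
  by (simp add: smooth_mult smooth_monom)

lemma weyl_coef_zero: "\<kappa> i > \<beta> i \<Longrightarrow> weyl_coef \<beta> \<gamma> \<kappa> = 0"
  unfolding weyl_coef_def by (rule prod_zero) auto

lemma leibniz:
  assumes h: "smooth_fun h"
  shows "pdiff_multi \<beta> (\<lambda>x. monom \<gamma> x * h x) =
    (\<lambda>x. \<Sum>\<kappa>\<in>{\<kappa>. \<forall>i. \<kappa> i \<le> \<beta> i}. weyl_coef \<beta> \<gamma> \<kappa> * (monom (\<lambda>i. \<gamma> i - \<kappa> i) x * pdiff_multi (\<lambda>i. \<beta> i - \<kappa> i) h x))"
proof (induction "sum \<beta> UNIV" arbitrary: \<beta>)
  case 0
  then have b: "\<beta> = (\<lambda>_. 0)" by (simp add: fun_eq_iff)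
  have K: "{\<kappa>::'a\<Rightarrow>nat. \<forall>i. \<kappa> i \<le> (0::nat)} = {\<lambda>_. 0}" by (auto simp: fun_eq_iff)
  show ?case unfolding b K by (simp add: weyl_coef_def pdiff_multi_zero)
next
  case (Suc m \<beta>)
  have "\<exists>i. \<beta> i > 0"
  proof (rule ccontr)
    assume "\<not> (\<exists>i. \<beta> i > 0)"
    then have "\<beta> = (\<lambda>_. 0)" by (auto simp: fun_eq_iff)
    then show False using Suc.hyps(2) by simp
  qed
  then obtain i where i: "\<beta> i > 0" by blast
  define \<beta>' where "\<beta>' = \<beta>(i := \<beta> i - 1)"
  have bb: "\<beta> = \<beta>'(i := Suc (\<beta>' i))" using i by (auto simp: \<beta>'_def fun_eq_iff)
  have "sum \<beta> UNIV = \<beta> i + sum \<beta> (UNIV - {i})" by (simp add: sum.remove)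
  moreover have "sum \<beta>' UNIV = \<beta>' i + sum \<beta>' (UNIV - {i})" by (simp add: sum.remove)
  moreover have "sum \<beta>' (UNIV - {i}) = sum \<beta> (UNIV - {i})" by (rule sum.cong) (auto simp: \<beta>'_def)
  ultimately have sm: "m = sum \<beta>' UNIV" using Suc.hyps(2) i by (simp add: \<beta>'_def)
  note IH = Suc.hyps(1)[OF sm]
  define K' where "K' = {\<kappa>::'a \<Rightarrow> nat. \<forall>i. \<kappa> i \<le> \<beta>' i}"
  define K where "K = {\<kappa>::'a \<Rightarrow> nat. \<forall>i. \<kappa> i \<le> \<beta> i}"
  have fK': "finite K'" and fK: "finite K" unfolding K'_def K_def by (rule finite_KS)+
  define T where "T \<kappa> x = monom (\<lambda>i. \<gamma> i - \<kappa> i) x * pdiff_multi (\<lambda>i. \<beta> i - \<kappa> i) h x" for \<kappa> x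
  define up where "up \<kappa> = \<kappa>(i := Suc (\<kappa> i))" for \<kappa> :: "'a \<Rightarrow> nat"
  have smF: "smooth_fun (\<lambda>x. monom \<gamma> x * h x)" by (rule smooth_monom_mult[OF h])
  have sm_term: "smooth_fun (\<lambda>x. monom \<mu> x * pdiff_multi \<nu> h x)" for \<mu> \<nu>
    by (rule smooth_monom_mult[OF smooth_pdiff_multi[OF h]])
  have step: "pdiff i (\<lambda>x. monom (\<lambda>j. \<gamma> j - \<kappa> j) x * pdiff_multi (\<lambda>j. \<beta>' j - \<kappa> j) h x) x
      = T \<kappa> x + of_nat (\<gamma> i - \<kappa> i) * T (up \<kappa>) x" if "\<kappa> \<in> K'" for \<kappa> x
  proof -
    have k: "\<forall>j. \<kappa> j \<le> \<beta>' j" using that by (simp add: K'_def)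
    have e1: "(\<lambda>j. \<beta>' j - \<kappa> j)(i := Suc (\<beta>' i - \<kappa> i)) = (\<lambda>j. \<beta> j - \<kappa> j)"
      using k by (auto simp: fun_eq_iff bb Suc_diff_le)
    have e2: "(\<lambda>j. \<gamma> j - \<kappa> j)(i := \<gamma> i - \<kappa> i - 1) = (\<lambda>j. \<gamma> j - up \<kappa> j)"
      by (auto simp: fun_eq_iff up_def)
    have e3: "(\<lambda>j. \<beta>' j - \<kappa> j) = (\<lambda>j. \<beta> j - up \<kappa> j)"
      by (auto simp: fun_eq_iff up_def bb)
    show ?thesis
      unfolding pdiff_monom_mult[OF smooth_pdiff_multi[OF h]] pdiff_pdiff_multi[OF h]
      unfolding T_def e1 e2
      by (subst e3) (simp add: ac_simps)
  qed
  have "pdiff_multi \<beta> (\<lambda>x. monom \<gamma> x * h x) = pdiff i (pdiff_multi \<beta>' (\<lambda>x. monom \<gamma> x * h x))"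
    by (simp add: bb pdiff_pdiff_multi smF)
  also have "\<dots> = pdiff i (\<lambda>x. \<Sum>\<kappa>\<in>K'. weyl_coef \<beta>' \<gamma> \<kappa> * (monom (\<lambda>j. \<gamma> j - \<kappa> j) x * pdiff_multi (\<lambda>j. \<beta>' j - \<kappa> j) h x))"
    by (simp add: IH K'_def)
  also have "\<dots> = (\<lambda>x. \<Sum>\<kappa>\<in>K'. weyl_coef \<beta>' \<gamma> \<kappa> * pdiff i (\<lambda>x. monom (\<lambda>j. \<gamma> j - \<kappa> j) x * pdiff_multi (\<lambda>j. \<beta>' j - \<kappa> j) h x) x)"
  proof -
    have "pdiff i (\<lambda>x. \<Sum>\<kappa>\<in>K'. weyl_coef \<beta>' \<gamma> \<kappa> * (monom (\<lambda>j. \<gamma> j - \<kappa> j) x * pdiff_multi (\<lambda>j. \<beta>' j - \<kappa> j) h x))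
       = (\<lambda>x. \<Sum>\<kappa>\<in>K'. pdiff i (\<lambda>x. weyl_coef \<beta>' \<gamma> \<kappa> * (monom (\<lambda>j. \<gamma> j - \<kappa> j) x * pdiff_multi (\<lambda>j. \<beta>' j - \<kappa> j) h x)) x)"
      by (rule pdiff_sum[OF fK']) (intro linediff_cmult smooth_linediff sm_term)
    also have "\<dots> = (\<lambda>x. \<Sum>\<kappa>\<in>K'. weyl_coef \<beta>' \<gamma> \<kappa> * pdiff i (\<lambda>x. monom (\<lambda>j. \<gamma> j - \<kappa> j) x * pdiff_multi (\<lambda>j. \<beta>' j - \<kappa> j) h x) x)"
      by (simp add: pdiff_cmult[OF smooth_linediff[OF sm_term]])
    finally show ?thesis .
  qed
  also have "\<dots> = (\<lambda>x. \<Sum>\<kappa>\<in>K'. weyl_coef \<beta>' \<gamma> \<kappa> * (T \<kappa> x + of_nat (\<gamma> i - \<kappa> i) * T (up \<kappa>) x))"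
    by (rule ext, rule sum.cong) (simp_all add: step)
  also have "\<dots> = (\<lambda>x. \<Sum>\<kappa>\<in>K. weyl_coef \<beta> \<gamma> \<kappa> * T \<kappa> x)"
  proof (rule ext)
    fix x
    have A: "(\<Sum>\<kappa>\<in>K. weyl_coef \<beta>' \<gamma> \<kappa> * T \<kappa> x) = (\<Sum>\<kappa>\<in>K'. weyl_coef \<beta>' \<gamma> \<kappa> * T \<kappa> x)"
    proof (rule sum.mono_neutral_right[OF fK])
      show "K' \<subseteq> K" unfolding K'_def K_def bb by (auto simp: le_SucI)
      show "\<forall>\<kappa>\<in>K - K'. weyl_coef \<beta>' \<gamma> \<kappa> * T \<kappa> x = 0"
      proof
        fix \<kappa> assume "\<kappa> \<in> K - K'"
        then obtain j where "\<kappa> j > \<beta>' j" by (auto simp: K'_def not_le)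
        then show "weyl_coef \<beta>' \<gamma> \<kappa> * T \<kappa> x = 0" by (simp add: weyl_coef_zero)
      qed
    qed
    have img: "{\<kappa>\<in>K. 0 < \<kappa> i} = up ` K'"
    proof
      show "up ` K' \<subseteq> {\<kappa>\<in>K. 0 < \<kappa> i}" by (auto simp: up_def K'_def K_def bb)
      show "{\<kappa>\<in>K. 0 < \<kappa> i} \<subseteq> up ` K'"
      proof
        fix \<kappa> assume k: "\<kappa> \<in> {\<kappa>\<in>K. 0 < \<kappa> i}"
        have "\<kappa> = up (\<kappa>(i := \<kappa> i - 1))" using k by (auto simp: up_def fun_eq_iff)
        moreover have "\<kappa>(i := \<kappa> i - 1) \<in> K'"
        proof -
          have kk: "\<forall>j. \<kappa> j \<le> \<beta> j" using k by (simp add: K_def)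
          show ?thesis unfolding K'_def
          proof (clarify)
            fix j show "(\<kappa>(i := \<kappa> i - 1)) j \<le> \<beta>' j"
              using kk[rule_format, of j] by (cases "j = i") (auto simp: \<beta>'_def)
          qed
        qed
        ultimately show "\<kappa> \<in> up ` K'" by blast
      qed
    qed
    have inj: "inj_on up K'" by (rule inj_onI) (auto simp: up_def fun_eq_iff split: if_splits)
    have B: "(\<Sum>\<kappa>\<in>K. (if 0 < \<kappa> i then weyl_coef \<beta>' \<gamma> (\<kappa>(i := \<kappa> i - 1)) * of_nat (\<gamma> i - (\<kappa> i - 1)) else 0) * T \<kappa> x)
        = (\<Sum>\<kappa>\<in>K'. weyl_coef \<beta>' \<gamma> \<kappa> * (of_nat (\<gamma> i - \<kappa> i) * T (up \<kappa>) x))"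
    proof -
      have "(\<Sum>\<kappa>\<in>K. (if 0 < \<kappa> i then weyl_coef \<beta>' \<gamma> (\<kappa>(i := \<kappa> i - 1)) * of_nat (\<gamma> i - (\<kappa> i - 1)) else 0) * T \<kappa> x)
          = (\<Sum>\<kappa>\<in>{\<kappa>\<in>K. 0 < \<kappa> i}. weyl_coef \<beta>' \<gamma> (\<kappa>(i := \<kappa> i - 1)) * of_nat (\<gamma> i - (\<kappa> i - 1)) * T \<kappa> x)"
        unfolding sum.inter_filter[OF fK] by (rule sum.cong) auto
      also have "\<dots> = (\<Sum>\<kappa>\<in>K'. weyl_coef \<beta>' \<gamma> ((up \<kappa>)(i := up \<kappa> i - 1)) * of_nat (\<gamma> i - (up \<kappa> i - 1)) * T (up \<kappa>) x)"
        unfolding img by (rule sum.reindex[OF inj, unfolded comp_def])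
      also have "\<dots> = (\<Sum>\<kappa>\<in>K'. weyl_coef \<beta>' \<gamma> \<kappa> * (of_nat (\<gamma> i - \<kappa> i) * T (up \<kappa>) x))"
        by (rule sum.cong) (auto simp: up_def)
      finally show ?thesis .
    qed
    have "(\<Sum>\<kappa>\<in>K. weyl_coef \<beta> \<gamma> \<kappa> * T \<kappa> x) = (\<Sum>\<kappa>\<in>K. weyl_coef \<beta>' \<gamma> \<kappa> * T \<kappa> x) +
       (\<Sum>\<kappa>\<in>K. (if 0 < \<kappa> i then weyl_coef \<beta>' \<gamma> (\<kappa>(i := \<kappa> i - 1)) * of_nat (\<gamma> i - (\<kappa> i - 1)) else 0) * T \<kappa> x)"
      unfolding sum.distrib[symmetric] by (rule sum.cong) (simp_all add: bb coef_step distrib_right)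
    also have "\<dots> = (\<Sum>\<kappa>\<in>K'. weyl_coef \<beta>' \<gamma> \<kappa> * (T \<kappa> x + of_nat (\<gamma> i - \<kappa> i) * T (up \<kappa>) x))"
      unfolding A B sum.distrib[symmetric] by (simp add: distrib_left)
    finally show "(\<Sum>\<kappa>\<in>K'. weyl_coef \<beta>' \<gamma> \<kappa> * (T \<kappa> x + of_nat (\<gamma> i - \<kappa> i) * T (up \<kappa>) x)) = (\<Sum>\<kappa>\<in>K. weyl_coef \<beta> \<gamma> \<kappa> * T \<kappa> x)" ..
  qed
  finally show ?case by (simp add: K_def T_def)
qed

lemma monom_mult: "monom a x * monom c x = monom (\<lambda>i. a i + c i) x"
  unfolding monom_def by (simp add: prod.distrib power_add)

lemma monom_zero: "monom (\<lambda>_. 0) x = 1"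
  by (simp add: monom_def)

lemma weyl_coef_zero2: "\<kappa> i > \<gamma> i \<Longrightarrow> weyl_coef \<beta> \<gamma> \<kappa> = 0"
  unfolding weyl_coef_def by (rule prod_zero) auto

lemma pdiffs_sum: "finite S \<Longrightarrow> (\<And>k. k \<in> S \<Longrightarrow> smooth_fun (f k)) \<Longrightarrow>
   pdiffs is (\<lambda>x. \<Sum>k\<in>S. f k x) = (\<lambda>x. \<Sum>k\<in>S. pdiffs is (f k) x)"
proof (induction S rule: finite_induct)
  case empty then show ?case by (simp add: pdiffs_const)
next
  case (insert a S)
  have "pdiffs is (\<lambda>x. \<Sum>k\<in>insert a S. f k x) = pdiffs is (\<lambda>x. f a x + (\<Sum>k\<in>S. f k x))"
    using insert by simp
  also have "\<dots> = (\<lambda>x. pdiffs is (f a) x + pdiffs is (\<lambda>x. \<Sum>k\<in>S. f k x) x)"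
  proof -
    have sm: "smooth_fun (\<lambda>x. \<Sum>k\<in>S. f k x)" using insert by (intro smooth_sum) auto
    have sa: "smooth_fun (f a)" using insert by auto
    show ?thesis by (rule pdiffs_add) (simp add: smooth_funD[OF sm] smooth_funD[OF sa])
  qed
  finally show ?case using insert by simp
qed

lemma pdiff_multi_sum: "finite S \<Longrightarrow> (\<And>k. k \<in> S \<Longrightarrow> smooth_fun (f k)) \<Longrightarrow>
   pdiff_multi \<beta> (\<lambda>x. \<Sum>k\<in>S. f k x) = (\<lambda>x. \<Sum>k\<in>S. pdiff_multi \<beta> (f k) x)"
  unfolding pdiff_multi_mlist by (rule pdiffs_sum)

lemma pdiff_multi_cmult: "smooth_fun f \<Longrightarrow> pdiff_multi \<beta> (\<lambda>x. c * f x) = (\<lambda>x. c * pdiff_multi \<beta> f x)"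
  unfolding pdiff_multi_mlist by (rule pdiffs_cmult) (simp add: smooth_funD)

lemma pdiff_multi_add': "smooth_fun f \<Longrightarrow> smooth_fun g \<Longrightarrow> pdiff_multi \<beta> (\<lambda>x. f x + g x) = (\<lambda>x. pdiff_multi \<beta> f x + pdiff_multi \<beta> g x)"
  unfolding pdiff_multi_mlist by (rule pdiffs_add) (simp add: smooth_funD)

lemma weyl_act_superset:
  assumes "finite S" "{z. a z \<noteq> 0} \<subseteq> S"
  shows "weyl_act a g x = (\<Sum>z\<in>S. a z * monom (fst z) x * pdiff_multi (snd z) g x)"
  unfolding weyl_act_def case_prod_unfold prod.collapse
  by (rule sum.mono_neutral_left[OF assms]) auto

lemma smooth_weyl_act: "smooth_fun g \<Longrightarrow> smooth_fun (weyl_act a g)"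
proof (cases "finite {z. a z \<noteq> 0}")
  case True
  assume g: "smooth_fun g"
  show ?thesis unfolding weyl_act_def case_prod_unfold
    by (intro smooth_sum[OF True] smooth_mult smooth_cmult smooth_monom smooth_pdiff_multi g)
next
  case False
  then show ?thesis unfolding weyl_act_def by (simp add: smooth_const)
qed

lemma weyl_act_sum_fun:
  assumes "finite S" "\<And>k. k \<in> S \<Longrightarrow> smooth_fun (f k)"
  shows "weyl_act a (\<lambda>x. \<Sum>k\<in>S. f k x) = (\<lambda>x. \<Sum>k\<in>S. weyl_act a (f k) x)"
proof (rule ext)
  fix x
  show "weyl_act a (\<lambda>x. \<Sum>k\<in>S. f k x) x = (\<Sum>k\<in>S. weyl_act a (f k) x)"
    unfolding weyl_act_def case_prod_unfold
    by (simp add: pdiff_multi_sum[OF assms] sum_distrib_left sum.swap[of _ S])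
qed

lemma weyl_act_cmult_fun:
  assumes "smooth_fun f"
  shows "weyl_act a (\<lambda>x. c * f x) = (\<lambda>x. c * weyl_act a f x)"
  unfolding weyl_act_def case_prod_unfold pdiff_multi_cmult[OF assms]
  by (simp add: sum_distrib_left ac_simps)

lemma weyl_act_zero_fun: "weyl_act a (\<lambda>x. 0) = (\<lambda>x. 0)"
  unfolding weyl_act_def case_prod_unfold pdiff_multi_mlist pdiffs_const by simp

lemma weyl_act_sum_elem:
  assumes "finite S" "\<And>k. k \<in> S \<Longrightarrow> weyl_elem (A k)"
  shows "weyl_act (\<lambda>z. \<Sum>k\<in>S. A k z) g = (\<lambda>x. \<Sum>k\<in>S. weyl_act (A k) g x)"
proof (rule ext)
  fix x
  define U where "U = (\<Union>k\<in>S. {z. A k z \<noteq> 0})"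
  have fU: "finite U" unfolding U_def using assms by (auto simp: weyl_elem_def)
  have sub: "{z. (\<Sum>k\<in>S. A k z) \<noteq> 0} \<subseteq> U" unfolding U_def
    by (auto elim: sum.not_neutral_contains_not_neutral)
  have "weyl_act (\<lambda>z. \<Sum>k\<in>S. A k z) g x = (\<Sum>z\<in>U. (\<Sum>k\<in>S. A k z) * monom (fst z) x * pdiff_multi (snd z) g x)"
    by (rule weyl_act_superset[OF fU sub])
  also have "\<dots> = (\<Sum>k\<in>S. \<Sum>z\<in>U. A k z * monom (fst z) x * pdiff_multi (snd z) g x)"
    by (simp add: sum_distrib_right sum.swap[of _ U])
  also have "\<dots> = (\<Sum>k\<in>S. weyl_act (A k) g x)"
    by (rule sum.cong[OF refl], rule weyl_act_superset[symmetric, OF fU]) (auto simp: U_def)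
  finally show "weyl_act (\<lambda>z. \<Sum>k\<in>S. A k z) g x = (\<Sum>k\<in>S. weyl_act (A k) g x)" .
qed

lemma weyl_act_diff_elem:
  assumes "weyl_elem A" "weyl_elem B"
  shows "weyl_act (\<lambda>z. A z - B z) g = (\<lambda>x. weyl_act A g x - weyl_act B g x)"
proof (rule ext)
  fix x
  define U where "U = {z. A z \<noteq> 0} \<union> {z. B z \<noteq> 0}"
  have fU: "finite U" unfolding U_def using assms by (auto simp: weyl_elem_def)
  have "weyl_act (\<lambda>z. A z - B z) g x = (\<Sum>z\<in>U. (A z - B z) * monom (fst z) x * pdiff_multi (snd z) g x)"
    by (rule weyl_act_superset[OF fU]) (auto simp: U_def)
  also have "\<dots> = (\<Sum>z\<in>U. A z * monom (fst z) x * pdiff_multi (snd z) g x) - (\<Sum>z\<in>U. B z * monom (fst z) x * pdiff_multi (snd z) g x)"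
    by (simp add: sum_subtractf[symmetric] algebra_simps)
  also have "\<dots> = weyl_act A g x - weyl_act B g x"
    by (subst (1 2) weyl_act_superset[OF fU]) (auto simp: U_def)
  finally show "weyl_act (\<lambda>z. A z - B z) g x = weyl_act A g x - weyl_act B g x" .
qed

lemma weyl_assoc:
  fixes b r :: "'n::{finite,linorder} weyl"
  assumes b: "weyl_elem b" and r: "weyl_elem r" and g: "smooth_fun g"
  shows "weyl_elem (weyl_mult b r) \<and> weyl_act b (weyl_act r g) = weyl_act (weyl_mult b r) g"
proof -
  define Sb where "Sb = {z. b z \<noteq> 0}"
  define Sr where "Sr = {z. r z \<noteq> 0}"
  have fSb: "finite Sb" and fSr: "finite Sr" using b r by (simp_all add: Sb_def Sr_def weyl_elem_def)
  define KK where "KK z1 z2 = {\<kappa>::'n\<Rightarrow>nat. \<forall>i. \<kappa> i \<le> snd z1 i \<and> \<kappa> i \<le> fst z2 i}"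
    for z1 z2 :: "('n\<Rightarrow>nat) \<times> ('n\<Rightarrow>nat)"
  have fKK: "finite (KK z1 z2)" for z1 z2
    by (rule finite_subset[OF _ finite_KS[of "snd z1"]]) (auto simp: KK_def)
  define T' where "T' = Sigma Sb (\<lambda>z1. Sigma Sr (\<lambda>z2. KK z1 z2))"
  have fT': "finite T'" unfolding T'_def using fSb fSr fKK by (intro finite_SigmaI) auto
  define tup :: "(('n\<Rightarrow>nat) \<times> ('n\<Rightarrow>nat)) \<times> (('n\<Rightarrow>nat) \<times> ('n\<Rightarrow>nat)) \<times> ('n\<Rightarrow>nat) \<Rightarrow> _"
    where "tup = (\<lambda>(z1, z2, \<kappa>). (fst z1, snd z1, fst z2, snd z2, \<kappa>))"
  define T where "T = {(\<alpha>, \<beta>, \<gamma>, \<delta>, \<kappa>). b (\<alpha>, \<beta>) \<noteq> 0 \<and> r (\<gamma>, \<delta>) \<noteq> 0 \<and> (\<forall>i. \<kappa> i \<le> \<beta> i \<and> \<kappa> i \<le> \<gamma> i)}"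
  have T_eq: "T = tup ` T'"
  proof
    show "tup ` T' \<subseteq> T" by (auto simp: T_def T'_def tup_def Sb_def Sr_def KK_def)
    show "T \<subseteq> tup ` T'"
    proof
      fix t assume "t \<in> T"
      then obtain \<alpha> \<beta> \<gamma> \<delta> \<kappa> where t: "t = (\<alpha>, \<beta>, \<gamma>, \<delta>, \<kappa>)" "b (\<alpha>, \<beta>) \<noteq> 0" "r (\<gamma>, \<delta>) \<noteq> 0" "\<forall>i. \<kappa> i \<le> \<beta> i \<and> \<kappa> i \<le> \<gamma> i"
        unfolding T_def by auto
      then have "((\<alpha>, \<beta>), (\<gamma>, \<delta>), \<kappa>) \<in> T'" by (auto simp: T'_def Sb_def Sr_def KK_def)
      moreover have "t = tup ((\<alpha>, \<beta>), (\<gamma>, \<delta>), \<kappa>)" by (simp add: t tup_def)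
      ultimately show "t \<in> tup ` T'" by blast
    qed
  qed
  have inj: "inj_on tup T'" by (rule inj_onI) (auto simp: tup_def)
  have fT: "finite T" unfolding T_eq using fT' by simp
  define proj where "proj = (\<lambda>(\<alpha>::'n\<Rightarrow>nat, \<beta>::'n\<Rightarrow>nat, \<gamma>::'n\<Rightarrow>nat, \<delta>::'n\<Rightarrow>nat, \<kappa>::'n\<Rightarrow>nat).
        ((\<lambda>i. \<alpha> i + \<gamma> i - \<kappa> i), (\<lambda>i. \<beta> i + \<delta> i - \<kappa> i)))"
  define w where "w = (\<lambda>(\<alpha>, \<beta>, \<gamma>, \<delta>, \<kappa>). b (\<alpha>, \<beta>) * r (\<gamma>, \<delta>) * weyl_coef \<beta> \<gamma> \<kappa>)"
  have mult_eq: "weyl_mult b r y = (\<Sum>t\<in>{t\<in>T. proj t = y}. w t)" for y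
  proof -
    obtain \<mu> \<nu> where y: "y = (\<mu>, \<nu>)" by fastforce
    have "{(\<alpha>, \<beta>, \<gamma>, \<delta>, \<kappa>). b (\<alpha>, \<beta>) \<noteq> 0 \<and> r (\<gamma>, \<delta>) \<noteq> 0 \<and> (\<forall>i. \<kappa> i \<le> \<beta> i \<and> \<kappa> i \<le> \<gamma> i) \<and>
         \<mu> = (\<lambda>i. \<alpha> i + \<gamma> i - \<kappa> i) \<and> \<nu> = (\<lambda>i. \<beta> i + \<delta> i - \<kappa> i)} = {t\<in>T. proj t = y}"
      by (auto simp: T_def proj_def y)
    then show ?thesis unfolding weyl_mult_def y w_def by simp
  qed
  have supp: "{y. weyl_mult b r y \<noteq> 0} \<subseteq> proj ` T"
  proof
    fix y assume "y \<in> {y. weyl_mult b r y \<noteq> 0}"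
    then have "{t\<in>T. proj t = y} \<noteq> {}" unfolding mult_eq by force
    then show "y \<in> proj ` T" by blast
  qed
  have elem: "weyl_elem (weyl_mult b r)"
    unfolding weyl_elem_def by (rule finite_subset[OF supp]) (simp add: fT)
  have "weyl_act b (weyl_act r g) x = weyl_act (weyl_mult b r) g x" for x
  proof -
    define F where "F t = w t * monom (fst (proj t)) x * pdiff_multi (snd (proj t)) g x" for t
    have R: "weyl_act (weyl_mult b r) g x = (\<Sum>t\<in>T. F t)"
    proof -
      have "weyl_act (weyl_mult b r) g x = (\<Sum>y\<in>proj ` T. weyl_mult b r y * monom (fst y) x * pdiff_multi (snd y) g x)"
        by (rule weyl_act_superset[OF _ supp]) (simp add: fT)
      also have "\<dots> = (\<Sum>y\<in>proj ` T. \<Sum>t\<in>{t\<in>T. proj t = y}. F t)"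
        unfolding mult_eq sum_distrib_right F_def by (rule sum.cong[OF refl], rule sum.cong) auto
      also have "\<dots> = (\<Sum>t\<in>T. F t)"
        by (rule sum.image_gen[symmetric, OF fT])
      finally show ?thesis .
    qed
    have inner: "weyl_act r g = (\<lambda>y. \<Sum>z2\<in>Sr. r z2 * (monom (fst z2) y * pdiff_multi (snd z2) g y))"
      by (rule ext) (simp add: weyl_act_superset[OF fSr] Sr_def ac_simps)
    have sm2: "smooth_fun (\<lambda>y. monom (fst z2) y * pdiff_multi (snd z2) g y)" for z2
      by (rule smooth_monom_mult[OF smooth_pdiff_multi[OF g]])
    have D: "pdiff_multi \<beta> (weyl_act r g) x = (\<Sum>z2\<in>Sr. r z2 * (\<Sum>\<kappa>\<in>KK (\<alpha>, \<beta>) z2.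
        weyl_coef \<beta> (fst z2) \<kappa> * (monom (\<lambda>i. fst z2 i - \<kappa> i) x * pdiff_multi (\<lambda>i. \<beta> i - \<kappa> i + snd z2 i) g x)))" for \<alpha> \<beta>
    proof -
      have "pdiff_multi \<beta> (weyl_act r g) x = (\<Sum>z2\<in>Sr. r z2 * pdiff_multi \<beta> (\<lambda>y. monom (fst z2) y * pdiff_multi (snd z2) g y) x)"
        unfolding inner
        by (subst pdiff_multi_sum[OF fSr]) (auto intro!: smooth_cmult sm2 simp: pdiff_multi_cmult[OF sm2])
      also have "\<dots> = (\<Sum>z2\<in>Sr. r z2 * (\<Sum>\<kappa>\<in>{\<kappa>. \<forall>i. \<kappa> i \<le> \<beta> i}.
        weyl_coef \<beta> (fst z2) \<kappa> * (monom (\<lambda>i. fst z2 i - \<kappa> i) x * pdiff_multi (\<lambda>i. \<beta> i - \<kappa> i + snd z2 i) g x)))"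
        by (simp add: leibniz[OF smooth_pdiff_multi[OF g]] pdiff_multi_add[OF g])
      also have "\<dots> = (\<Sum>z2\<in>Sr. r z2 * (\<Sum>\<kappa>\<in>KK (\<alpha>, \<beta>) z2.
        weyl_coef \<beta> (fst z2) \<kappa> * (monom (\<lambda>i. fst z2 i - \<kappa> i) x * pdiff_multi (\<lambda>i. \<beta> i - \<kappa> i + snd z2 i) g x)))"
      proof (rule sum.cong[OF refl], rule arg_cong[where f = "\<lambda>u. _ * u"], rule sum.mono_neutral_right)
        fix z2
        show "finite {\<kappa>::'n\<Rightarrow>nat. \<forall>i. \<kappa> i \<le> \<beta> i}" by (rule finite_KS)
        show "KK (\<alpha>, \<beta>) z2 \<subseteq> {\<kappa>. \<forall>i. \<kappa> i \<le> \<beta> i}" by (auto simp: KK_def)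
        show "\<forall>\<kappa>\<in>{\<kappa>. \<forall>i. \<kappa> i \<le> \<beta> i} - KK (\<alpha>, \<beta>) z2. weyl_coef \<beta> (fst z2) \<kappa> *
           (monom (\<lambda>i. fst z2 i - \<kappa> i) x * pdiff_multi (\<lambda>i. \<beta> i - \<kappa> i + snd z2 i) g x) = 0"
        proof
          fix \<kappa> assume "\<kappa> \<in> {\<kappa>. \<forall>i. \<kappa> i \<le> \<beta> i} - KK (\<alpha>, \<beta>) z2"
          then have a1: "\<forall>i. \<kappa> i \<le> \<beta> i" and a2: "\<kappa> \<notin> KK (\<alpha>, \<beta>) z2"
            by simp_all
          from a2 obtain i where "\<not> (\<kappa> i \<le> \<beta> i \<and> \<kappa> i \<le> fst z2 i)" unfolding KK_def by auto
          with a1 have "\<kappa> i > fst z2 i" by auto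
          then show "weyl_coef \<beta> (fst z2) \<kappa> * (monom (\<lambda>i. fst z2 i - \<kappa> i) x * pdiff_multi (\<lambda>i. \<beta> i - \<kappa> i + snd z2 i) g x) = 0"
            by (simp add: weyl_coef_zero2)
        qed
      qed
      finally show ?thesis .
    qed
    have "weyl_act b (weyl_act r g) x = (\<Sum>z1\<in>Sb. b z1 * monom (fst z1) x * pdiff_multi (snd z1) (weyl_act r g) x)"
      by (rule weyl_act_superset[OF fSb]) (simp add: Sb_def)
    also have "\<dots> = (\<Sum>z1\<in>Sb. \<Sum>z2\<in>Sr. \<Sum>\<kappa>\<in>KK z1 z2. F (tup (z1, z2, \<kappa>)))"
    proof (rule sum.cong[OF refl])
      fix z1 assume "z1 \<in> Sb"
      obtain \<alpha> \<beta> where z1: "z1 = (\<alpha>, \<beta>)" by fastforce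
      show "b z1 * monom (fst z1) x * pdiff_multi (snd z1) (weyl_act r g) x = (\<Sum>z2\<in>Sr. \<Sum>\<kappa>\<in>KK z1 z2. F (tup (z1, z2, \<kappa>)))"
        unfolding z1 fst_conv snd_conv
        apply (subst D[of \<beta> \<alpha>])
        unfolding sum_distrib_left
      proof (rule sum.cong[OF refl], rule sum.cong[OF refl])
        fix z2 \<kappa> assume "\<kappa> \<in> KK (\<alpha>, \<beta>) z2"
        then have k: "\<forall>i. \<kappa> i \<le> \<beta> i \<and> \<kappa> i \<le> fst z2 i" by (simp add: KK_def)
        obtain \<gamma> \<delta> where z2: "z2 = (\<gamma>, \<delta>)" by fastforce
        have m: "monom \<alpha> x * monom (\<lambda>i. \<gamma> i - \<kappa> i) x = monom (\<lambda>i. \<alpha> i + \<gamma> i - \<kappa> i) x"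
          unfolding monom_mult using k z2 by (simp add: fun_eq_iff)
        have d: "(\<lambda>i. \<beta> i - \<kappa> i + \<delta> i) = (\<lambda>i. \<beta> i + \<delta> i - \<kappa> i)"
          using k by (auto simp: fun_eq_iff)
        show "b (\<alpha>, \<beta>) * monom \<alpha> x * (r z2 * (weyl_coef \<beta> (fst z2) \<kappa> *
             (monom (\<lambda>i. fst z2 i - \<kappa> i) x * pdiff_multi (\<lambda>i. \<beta> i - \<kappa> i + snd z2 i) g x))) =
           F (tup ((\<alpha>, \<beta>), z2, \<kappa>))"
          unfolding z2 fst_conv snd_conv F_def tup_def w_def proj_def d
          using m by (simp add: ac_simps)
      qed
    qed
    also have "\<dots> = (\<Sum>p\<in>T'. F (tup p))"
      unfolding T'_def using fSb fSr fKK
      by (simp add: sum.Sigma)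
    also have "\<dots> = (\<Sum>t\<in>T. F t)"
      unfolding T_eq by (rule sum.reindex[OF inj, symmetric, unfolded comp_def])
    finally show ?thesis using R by simp
  qed
  then show ?thesis using elem by blast
qed

lemma zero_grad_line:
  assumes u: "smooth_fun u" and z: "\<And>i x. pdiff i u x = 0"
  shows "u (y + t *\<^sub>R axis i 1) = u y"
proof -
  have d: "\<And>\<sigma>. \<sigma> \<in> UNIV \<Longrightarrow> ((\<lambda>\<sigma>. u (y + \<sigma> *\<^sub>R axis i 1)) has_vector_derivative 0) (at \<sigma> within UNIV)"
    using line_deriv[OF u, of y i] z by simp
  obtain c where "\<And>\<sigma>. \<sigma> \<in> UNIV \<Longrightarrow> u (y + \<sigma> *\<^sub>R axis i 1) = c"
    using has_vector_derivative_zero_constant[OF convex_UNIV, of "\<lambda>\<sigma>. u (y + \<sigma> *\<^sub>R axis i 1)"] d by blast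
  from this[of t] this[of 0] show ?thesis by simp
qed

lemma zero_grad_const:
  assumes u: "smooth_fun u" and z: "\<And>i x. pdiff i u x = 0"
  shows "u x = u y"
proof -
  have "u (y + (\<Sum>i\<in>F. t i *\<^sub>R axis i 1)) = u y" if "finite F" for F t
    using that
  proof (induction F rule: finite_induct)
    case empty then show ?case by simp
  next
    case (insert a F)
    have "u (y + (\<Sum>i\<in>insert a F. t i *\<^sub>R axis i 1)) = u ((y + (\<Sum>i\<in>F. t i *\<^sub>R axis i 1)) + t a *\<^sub>R axis a 1)"
      using insert by (simp add: algebra_simps)
    also have "\<dots> = u (y + (\<Sum>i\<in>F. t i *\<^sub>R axis i 1))" by (rule zero_grad_line[OF u z])
    finally show ?case using insert by simp
  qed
  from this[of UNIV "\<lambda>i. x$i - y$i"]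
  have "u (y + (\<Sum>i\<in>UNIV. (x$i - y$i) *\<^sub>R axis i 1)) = u y" by simp
  moreover have "y + (\<Sum>i\<in>UNIV. (x$i - y$i) *\<^sub>R axis i 1) = x"
    by (simp add: vec_eq_iff axis_def if_distrib cong: if_cong)
  ultimately show ?thesis by simp
qed

definition single :: "(('n \<Rightarrow> nat) \<times> ('n \<Rightarrow> nat)) \<Rightarrow> complex \<Rightarrow> 'n weyl" where
  "single z0 c = (\<lambda>z. if z = z0 then c else 0)"

lemma weyl_elem_single: "weyl_elem (single z0 c)"
  unfolding weyl_elem_def single_def by (rule finite_subset[of _ "{z0}"]) auto

lemma weyl_elem_zero: "weyl_elem (\<lambda>z. 0)"
  unfolding weyl_elem_def by simp

lemma weyl_act_single: "weyl_act (single z0 c) f = (\<lambda>x. c * monom (fst z0) x * pdiff_multi (snd z0) f x)"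
  by (rule ext, subst weyl_act_superset[of "{z0}"]) (auto simp: single_def)

lemma weyl_act_zero_elem: "weyl_act (\<lambda>z. 0) f = (\<lambda>x. 0)"
  unfolding weyl_act_def by simp

abbreviation one_w :: "'n weyl" where "one_w \<equiv> single ((\<lambda>_. 0), (\<lambda>_. 0)) 1"

lemma weyl_act_one: "weyl_act one_w f = f"
  by (simp add: weyl_act_single monom_zero pdiff_multi_zero)

lemma weyl_coef_zero_zero: "weyl_coef (\<lambda>_. 0) \<mu> (\<lambda>_. 0) = 1"
  by (simp add: weyl_coef_def)

lemma weyl_mult_one: "weyl_mult one_w a = a"
proof (rule ext)
  fix y :: "('a \<Rightarrow> nat) \<times> ('a \<Rightarrow> nat)"
  obtain \<mu> \<nu> where y: "y = (\<mu>, \<nu>)" by fastforce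
  have S: "{(\<alpha>, \<beta>, \<gamma>, \<delta>, \<kappa>). one_w (\<alpha>, \<beta>) \<noteq> 0 \<and> a (\<gamma>, \<delta>) \<noteq> 0 \<and> (\<forall>i. \<kappa> i \<le> \<beta> i \<and> \<kappa> i \<le> \<gamma> i) \<and>
       \<mu> = (\<lambda>i. \<alpha> i + \<gamma> i - \<kappa> i) \<and> \<nu> = (\<lambda>i. \<beta> i + \<delta> i - \<kappa> i)} =
       (if a (\<mu>, \<nu>) \<noteq> 0 then {((\<lambda>_. 0), (\<lambda>_. 0), \<mu>, \<nu>, (\<lambda>_. 0))} else {})"
  proof (intro set_eqI iffI)
    fix t :: "('a\<Rightarrow>nat) \<times> ('a\<Rightarrow>nat) \<times> ('a\<Rightarrow>nat) \<times> ('a\<Rightarrow>nat) \<times> ('a\<Rightarrow>nat)"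
    assume t: "t \<in> {(\<alpha>, \<beta>, \<gamma>, \<delta>, \<kappa>). one_w (\<alpha>, \<beta>) \<noteq> 0 \<and> a (\<gamma>, \<delta>) \<noteq> 0 \<and> (\<forall>i. \<kappa> i \<le> \<beta> i \<and> \<kappa> i \<le> \<gamma> i) \<and>
       \<mu> = (\<lambda>i. \<alpha> i + \<gamma> i - \<kappa> i) \<and> \<nu> = (\<lambda>i. \<beta> i + \<delta> i - \<kappa> i)}"
    obtain \<alpha> \<beta> \<gamma> \<delta> \<kappa> where tt: "t = (\<alpha>, \<beta>, \<gamma>, \<delta>, \<kappa>)" by (cases t) auto
    have h: "one_w (\<alpha>, \<beta>) \<noteq> 0" "a (\<gamma>, \<delta>) \<noteq> 0" "\<forall>i. \<kappa> i \<le> \<beta> i \<and> \<kappa> i \<le> \<gamma> i"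
       "\<mu> = (\<lambda>i. \<alpha> i + \<gamma> i - \<kappa> i)" "\<nu> = (\<lambda>i. \<beta> i + \<delta> i - \<kappa> i)"
      using t unfolding tt by auto
    have ab: "\<alpha> = (\<lambda>_. 0)" "\<beta> = (\<lambda>_. 0)" using h(1) by (auto simp: single_def split: if_splits)
    have k: "\<kappa> = (\<lambda>_. 0)" using h(3) ab by (auto simp: fun_eq_iff)
    have "\<gamma> = \<mu>" "\<delta> = \<nu>" using h(4,5) ab k by auto
    then show "t \<in> (if a (\<mu>, \<nu>) \<noteq> 0 then {((\<lambda>_. 0), (\<lambda>_. 0), \<mu>, \<nu>, (\<lambda>_. 0))} else {})"
      using h(2) tt ab k by simp
  next
    fix t :: "('a\<Rightarrow>nat) \<times> ('a\<Rightarrow>nat) \<times> ('a\<Rightarrow>nat) \<times> ('a\<Rightarrow>nat) \<times> ('a\<Rightarrow>nat)"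
    assume "t \<in> (if a (\<mu>, \<nu>) \<noteq> 0 then {((\<lambda>_. 0), (\<lambda>_. 0), \<mu>, \<nu>, (\<lambda>_. 0))} else {})"
    then show "t \<in> {(\<alpha>, \<beta>, \<gamma>, \<delta>, \<kappa>). one_w (\<alpha>, \<beta>) \<noteq> 0 \<and> a (\<gamma>, \<delta>) \<noteq> 0 \<and> (\<forall>i. \<kappa> i \<le> \<beta> i \<and> \<kappa> i \<le> \<gamma> i) \<and>
       \<mu> = (\<lambda>i. \<alpha> i + \<gamma> i - \<kappa> i) \<and> \<nu> = (\<lambda>i. \<beta> i + \<delta> i - \<kappa> i)}"
      by (auto simp: single_def split: if_splits)
  qed
  show "weyl_mult one_w a y = a y"
    unfolding weyl_mult_def y by (simp only: case_prod_conv S) (simp add: single_def weyl_coef_zero_zero)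
qed

lemma weyl_mult_zero: "weyl_mult (\<lambda>z. 0) a = (\<lambda>z. 0)"
  unfolding weyl_mult_def by (simp add: fun_eq_iff split_beta)

lemma ker_solution:
  fixes p :: "'m::finite \<Rightarrow> (real, 'n::{finite,linorder}) vec \<Rightarrow> complex"
    and R :: "'r::finite \<Rightarrow> 'm \<Rightarrow> 'n weyl"
  assumes rg: "rows_generate R (ker_kappa p)"
    and gs: "\<And>j. smooth_fun (g j)"
    and sol: "\<And>k. (\<lambda>x. \<Sum>j\<in>UNIV. weyl_act (R k j) (g j) x) = (\<lambda>x. 0)"
    and a: "a \<in> ker_kappa p"
  shows "(\<lambda>x. \<Sum>j\<in>UNIV. weyl_act (a j) (g j) x) = (\<lambda>x. 0)"
proof -
  have Rel: "\<And>k j. weyl_elem (R k j)" using rg by (simp add: rows_generate_def)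
  have M: "ker_kappa p = {a. \<exists>b :: 'r \<Rightarrow> 'n weyl. (\<forall>k. weyl_elem (b k)) \<and>
                a = (\<lambda>j z. \<Sum>k\<in>UNIV. weyl_mult (b k) (R k j) z)}"
    using rg by (simp add: rows_generate_def)
  obtain b where bel: "\<And>k. weyl_elem (b k)" and aeq: "a = (\<lambda>j z. \<Sum>k\<in>UNIV. weyl_mult (b k) (R k j) z)"
    using a unfolding M by blast
  have act: "weyl_act (a j) (g j) = (\<lambda>x. \<Sum>k\<in>UNIV. weyl_act (b k) (weyl_act (R k j) (g j)) x)" for j
  proof -
    have "weyl_act (a j) (g j) = (\<lambda>x. \<Sum>k\<in>UNIV. weyl_act (weyl_mult (b k) (R k j)) (g j) x)"
      unfolding aeq by (rule weyl_act_sum_elem) (use weyl_assoc[OF bel Rel gs] in auto)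
    also have "\<dots> = (\<lambda>x. \<Sum>k\<in>UNIV. weyl_act (b k) (weyl_act (R k j) (g j)) x)"
      using weyl_assoc[OF bel Rel gs] by simp
    finally show ?thesis .
  qed
  show ?thesis
  proof (rule ext)
    fix x
    have "(\<Sum>j\<in>UNIV. weyl_act (a j) (g j) x) = (\<Sum>k\<in>UNIV. \<Sum>j\<in>UNIV. weyl_act (b k) (weyl_act (R k j) (g j)) x)"
      unfolding act by (rule sum.swap)
    also have "\<dots> = (\<Sum>k\<in>UNIV. weyl_act (b k) (\<lambda>x. \<Sum>j\<in>UNIV. weyl_act (R k j) (g j) x) x)"
      by (subst weyl_act_sum_fun) (auto intro: smooth_weyl_act gs)
    also have "\<dots> = 0" unfolding sol weyl_act_zero_fun by simp
    finally show "(\<Sum>j\<in>UNIV. weyl_act (a j) (g j) x) = 0" .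
  qed
qed

lemma row_in_ker:
  fixes R :: "'r::finite \<Rightarrow> 'm::finite \<Rightarrow> 'n::{finite,linorder} weyl"
  assumes rg: "rows_generate R M"
  shows "R k \<in> M"
proof -
  define b :: "'r \<Rightarrow> 'n weyl" where "b = (\<lambda>k'. if k' = k then one_w else (\<lambda>z. 0))"
  have bel: "\<forall>k. weyl_elem (b k)" by (simp add: b_def weyl_elem_single weyl_elem_zero)
  have eq: "(\<lambda>j z. \<Sum>k'\<in>UNIV. weyl_mult (b k') (R k' j) z) = R k"
  proof (intro ext)
    fix j z
    have "(\<Sum>k'\<in>UNIV. weyl_mult (b k') (R k' j) z) = (\<Sum>k'\<in>UNIV. if k' = k then R k j z else 0)"
      by (rule sum.cong) (auto simp: b_def weyl_mult_one weyl_mult_zero)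
    also have "\<dots> = R k j z" by simp
    finally show "(\<Sum>k'\<in>UNIV. weyl_mult (b k') (R k' j) z) = R k j z" .
  qed
  have M: "M = {a. \<exists>b :: 'r \<Rightarrow> 'n weyl. (\<forall>k. weyl_elem (b k)) \<and>
                a = (\<lambda>j z. \<Sum>k\<in>UNIV. weyl_mult (b k) (R k j) z)}"
    using rg by (simp add: rows_generate_def)
  show ?thesis
    apply (subst M)
    apply (rule CollectI)
    apply (rule exI[of _ b])
    using bel eq by simp
qed

lemma sum_if_elem:
  fixes j0 :: "'m::finite"
  shows "(\<Sum>j\<in>UNIV. weyl_act (if j = j0 then X else (\<lambda>z. 0)) (f j) x) = weyl_act X (f j0) x"
proof -
  have "(\<Sum>j\<in>UNIV. weyl_act (if j = j0 then X else (\<lambda>z. 0)) (f j) x) = (\<Sum>j\<in>UNIV. if j = j0 then weyl_act X (f j) x else 0)"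
    by (rule sum.cong) (auto simp: weyl_act_zero_elem)
  then show ?thesis by simp
qed

lemma weyl_elem_diff: "weyl_elem A \<Longrightarrow> weyl_elem B \<Longrightarrow> weyl_elem (\<lambda>z. A z - B z)"
  unfolding weyl_elem_def by (rule finite_subset[of _ "{z. A z \<noteq> 0} \<union> {z. B z \<noteq> 0}"]) auto

lemma mlist_Nil_iff: "mlist \<nu> = [] \<longleftrightarrow> \<nu> = (\<lambda>_. 0)"
proof
  assume "mlist \<nu> = []"
  then have "count (mset (mlist \<nu>)) j = 0" for j by simp
  then show "\<nu> = (\<lambda>_. 0)" by (auto simp: count_mlist fun_eq_iff)
next
  assume "\<nu> = (\<lambda>_. 0)" then show "mlist \<nu> = []" by (simp add: mlist_def concat_map_Nil)
qed

lemma pdiff_multi_monom: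
  "pdiff_multi \<beta> (monom \<gamma>) = (\<lambda>x. weyl_coef \<beta> \<gamma> \<beta> * monom (\<lambda>i. \<gamma> i - \<beta> i) x)"
proof -
  have "pdiff_multi \<beta> (monom \<gamma>) = pdiff_multi \<beta> (\<lambda>x. monom \<gamma> x * 1)" by simp
  also have "\<dots> = (\<lambda>x. \<Sum>\<kappa>\<in>{\<kappa>. \<forall>i. \<kappa> i \<le> \<beta> i}. weyl_coef \<beta> \<gamma> \<kappa> * (monom (\<lambda>i. \<gamma> i - \<kappa> i) x * pdiff_multi (\<lambda>i. \<beta> i - \<kappa> i) (\<lambda>x. 1) x))"
    by (rule leibniz[OF smooth_const])
  also have "\<dots> = (\<lambda>x. \<Sum>\<kappa>\<in>{\<kappa>. \<forall>i. \<kappa> i \<le> \<beta> i}. if \<kappa> = \<beta> then weyl_coef \<beta> \<gamma> \<beta> * monom (\<lambda>i. \<gamma> i - \<beta> i) x else 0)"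
  proof (rule ext, rule sum.cong[OF refl])
    fix x \<kappa> assume k: "\<kappa> \<in> {\<kappa>. \<forall>i. \<kappa> i \<le> \<beta> i}"
    have "(\<lambda>i. \<beta> i - \<kappa> i) = (\<lambda>_. 0) \<longleftrightarrow> \<kappa> = \<beta>"
      using k by (auto simp: fun_eq_iff intro: antisym)
    then show "weyl_coef \<beta> \<gamma> \<kappa> * (monom (\<lambda>i. \<gamma> i - \<kappa> i) x * pdiff_multi (\<lambda>i. \<beta> i - \<kappa> i) (\<lambda>x. 1) x) =
      (if \<kappa> = \<beta> then weyl_coef \<beta> \<gamma> \<beta> * monom (\<lambda>i. \<gamma> i - \<beta> i) x else 0)"
      by (auto simp: pdiff_multi_mlist pdiffs_const mlist_Nil_iff)
  qed
  also have "\<dots> = (\<lambda>x. weyl_coef \<beta> \<gamma> \<beta> * monom (\<lambda>i. \<gamma> i - \<beta> i) x)"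
    by (rule ext) (simp add: finite_KS)
  finally show ?thesis .
qed

theorem theorem5p2:
  fixes p :: "'m::finite \<Rightarrow> (real, 'n::{finite,linorder}) vec \<Rightarrow> complex"
    and R :: "'r::finite \<Rightarrow> 'm \<Rightarrow> 'n weyl"
  assumes "\<forall>j. poly_fun (p j)"
    and "p \<noteq> (\<lambda>j x. 0)"
    and "rows_generate R (ker_kappa p)"
  shows "{g :: 'm \<Rightarrow> (real, 'n) vec \<Rightarrow> complex. (\<forall>j. smooth_fun (g j)) \<and>
            (\<forall>k. (\<lambda>x. \<Sum>j\<in>UNIV. weyl_act (R k j) (g j) x) = (\<lambda>x. 0))}
         = {(\<lambda>j x. c * p j x) | c :: complex. True}"
proof -
  note rg = assms(3)
  have psm: "\<And>j. smooth_fun (p j)" using assms(1) smooth_poly_fun by blast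
  have kerR: "(\<lambda>x. \<Sum>j\<in>UNIV. weyl_act (R k j) (p j) x) = (\<lambda>x. 0)" for k
    using row_in_ker[OF rg, of k] by (simp add: ker_kappa_def)
  show ?thesis
  proof (intro set_eqI iffI)
    fix g assume "g \<in> {(\<lambda>j x. c * p j x) | c :: complex. True}"
    then obtain c where g: "g = (\<lambda>j x. c * p j x)" by blast
    have "(\<lambda>x. \<Sum>j\<in>UNIV. weyl_act (R k j) (g j) x) = (\<lambda>x. 0)" for k
    proof (rule ext)
      fix x
      have "(\<Sum>j\<in>UNIV. weyl_act (R k j) (g j) x) = c * (\<Sum>j\<in>UNIV. weyl_act (R k j) (p j) x)"
        unfolding g by (simp add: weyl_act_cmult_fun[OF psm] sum_distrib_left)
      also have "\<dots> = 0" using fun_cong[OF kerR[of k], of x] by simp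
      finally show "(\<Sum>j\<in>UNIV. weyl_act (R k j) (g j) x) = 0" .
    qed
    then show "g \<in> {g. (\<forall>j. smooth_fun (g j)) \<and> (\<forall>k. (\<lambda>x. \<Sum>j\<in>UNIV. weyl_act (R k j) (g j) x) = (\<lambda>x. 0))}"
      unfolding g by (auto intro: smooth_cmult psm)
  next
    fix g assume "g \<in> {g. (\<forall>j. smooth_fun (g j)) \<and> (\<forall>k. (\<lambda>x. \<Sum>j\<in>UNIV. weyl_act (R k j) (g j) x) = (\<lambda>x. 0))}"
    then have gs: "\<And>j. smooth_fun (g j)" and sol: "\<And>k. (\<lambda>x. \<Sum>j\<in>UNIV. weyl_act (R k j) (g j) x) = (\<lambda>x. 0)"
      by auto
    note kerg = ker_solution[OF rg gs sol]
    have "\<forall>j. \<exists>c. finite {\<alpha>. c \<alpha> \<noteq> 0} \<and> p j = (\<lambda>x. \<Sum>\<alpha>\<in>{\<alpha>. c \<alpha> \<noteq> 0}. c \<alpha> * monom \<alpha> x)"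
      using assms(1) by (simp add: poly_fun_def)
    from choice[OF this] obtain cf where cf: "\<And>j. finite {\<alpha>. cf j \<alpha> \<noteq> 0}"
      "\<And>j. p j = (\<lambda>x. \<Sum>\<alpha>\<in>{\<alpha>. cf j \<alpha> \<noteq> 0}. cf j \<alpha> * monom \<alpha> x)" by blast
    have "\<exists>j0. p j0 \<noteq> (\<lambda>x. 0)" using assms(2) by (auto simp: fun_eq_iff)
    then obtain j0 where j0: "p j0 \<noteq> (\<lambda>x. 0)" by blast
    define A where "A = {\<alpha>. cf j0 \<alpha> \<noteq> 0}"
    have fA: "finite A" using cf(1) by (simp add: A_def)
    have Ane: "A \<noteq> {}" using j0 cf(2)[of j0] by (auto simp: A_def)
    define mx where "mx = Max ((\<lambda>\<alpha>. sum \<alpha> UNIV) ` A)"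
    have "mx \<in> (\<lambda>\<alpha>. sum \<alpha> UNIV) ` A" unfolding mx_def using fA Ane by (intro Max_in) auto
    then obtain \<alpha>0 where a0: "\<alpha>0 \<in> A" "sum \<alpha>0 UNIV = mx" by blast
    have amax: "sum \<alpha> UNIV \<le> sum \<alpha>0 UNIV" if "\<alpha> \<in> A" for \<alpha>
      unfolding a0(2) mx_def using fA that by (intro Max_ge) auto
    define L where "L = cf j0 \<alpha>0 * weyl_coef \<alpha>0 \<alpha>0 \<alpha>0"
    have "weyl_coef \<alpha>0 \<alpha>0 \<alpha>0 \<noteq> 0" unfolding weyl_coef_def by simp
    then have L0: "L \<noteq> 0" using a0(1) by (simp add: L_def A_def)
    have coef0: "weyl_coef \<alpha>0 \<alpha> \<alpha>0 = 0" if inA: "\<alpha> \<in> A" and ne: "\<alpha> \<noteq> \<alpha>0" for \<alpha>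
    proof -
      have "\<exists>i. \<alpha>0 i > \<alpha> i"
      proof (rule ccontr)
        assume "\<not> (\<exists>i. \<alpha>0 i > \<alpha> i)"
        then have le: "\<And>i. \<alpha>0 i \<le> \<alpha> i" by (simp add: not_less)
        obtain i where "\<alpha>0 i \<noteq> \<alpha> i" using ne by (metis ext)
        then have "\<alpha>0 i < \<alpha> i" using le[of i] by simp
        then have "sum \<alpha>0 UNIV < sum \<alpha> UNIV"
          by (intro sum_strict_mono_ex1) (auto simp: le)
        then show False using amax[OF inA] by simp
      qed
      then obtain i where "\<alpha>0 i > \<alpha> i" by blast
      then show ?thesis by (rule weyl_coef_zero2)
    qed
    have DP: "pdiff_multi \<alpha>0 (p j0) = (\<lambda>x. L)"
    proof -
      have "pdiff_multi \<alpha>0 (p j0) = (\<lambda>x. \<Sum>\<alpha>\<in>A. cf j0 \<alpha> * pdiff_multi \<alpha>0 (monom \<alpha>) x)"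
        unfolding cf(2)[of j0] A_def[symmetric]
        by (subst pdiff_multi_sum[OF fA]) (auto intro: smooth_cmult smooth_monom simp: pdiff_multi_cmult[OF smooth_monom])
      also have "\<dots> = (\<lambda>x. \<Sum>\<alpha>\<in>A. if \<alpha> = \<alpha>0 then L else 0)"
        by (rule ext, rule sum.cong[OF refl]) (auto simp: pdiff_multi_monom coef0 L_def monom_zero)
      also have "\<dots> = (\<lambda>x. L)" using a0(1) fA by simp
      finally show ?thesis .
    qed
    define w0 where "w0 = inverse L"
    have w0: "w0 \<noteq> 0" "w0 * L = 1" using L0 by (simp_all add: w0_def)
    have grad0: "pdiff i (pdiff_multi \<alpha>0 (g j0)) x = 0" for i x
    proof -
      define A1 :: "'m \<Rightarrow> 'n weyl" where "A1 = (\<lambda>j. if j = j0 then single ((\<lambda>_. 0), \<alpha>0(i := Suc (\<alpha>0 i))) w0 else (\<lambda>z. 0))"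
      have act1: "(\<Sum>j\<in>UNIV. weyl_act (A1 j) (f j) y) = w0 * pdiff i (pdiff_multi \<alpha>0 (f j0)) y"
        if "smooth_fun (f j0)" for f :: "'m \<Rightarrow> (real, 'n) vec \<Rightarrow> complex" and y
        unfolding A1_def sum_if_elem weyl_act_single
        by (simp add: monom_zero pdiff_pdiff_multi[OF that])
      have "A1 \<in> ker_kappa p"
        unfolding ker_kappa_def
      proof (intro CollectI conjI allI ext)
        fix j show "weyl_elem (A1 j)" by (simp add: A1_def weyl_elem_single weyl_elem_zero)
      next
        fix y show "(\<Sum>j\<in>UNIV. weyl_act (A1 j) (p j) y) = 0"
          by (simp add: act1[OF psm] DP pdiff_const)
      qed
      from fun_cong[OF kerg[OF this], of x] act1[of g x, OF gs]
      show ?thesis using w0(1) by simp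
    qed
    define Cg where "Cg = pdiff_multi \<alpha>0 (g j0) 0"
    have Dg: "pdiff_multi \<alpha>0 (g j0) x = Cg" for x
      unfolding Cg_def by (rule zero_grad_const[OF smooth_pdiff_multi[OF gs] grad0])
    have "g j x = (w0 * Cg) * p j x" for j x
    proof -
      define PW :: "'n weyl" where "PW = (\<lambda>z. if snd z = \<alpha>0 then cf j (fst z) * w0 else 0)"
      define Sj where "Sj = (\<lambda>\<mu>. (\<mu>, \<alpha>0)) ` {\<alpha>. cf j \<alpha> \<noteq> 0}"
      have fSj: "finite Sj" using cf(1) by (simp add: Sj_def)
      have suppPW: "{z. PW z \<noteq> 0} \<subseteq> Sj" by (auto simp: PW_def Sj_def)
      have PWel: "weyl_elem PW" unfolding weyl_elem_def by (rule finite_subset[OF suppPW fSj])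
      have actPW: "weyl_act PW f y = p j y * (w0 * pdiff_multi \<alpha>0 f y)" for f y
      proof -
        have inj: "inj_on (\<lambda>\<mu>. (\<mu>, \<alpha>0)) {\<alpha>. cf j \<alpha> \<noteq> 0}" by (rule inj_onI) auto
        have "weyl_act PW f y = (\<Sum>z\<in>Sj. PW z * monom (fst z) y * pdiff_multi (snd z) f y)"
          by (rule weyl_act_superset[OF fSj suppPW])
        also have "\<dots> = (\<Sum>\<mu>\<in>{\<alpha>. cf j \<alpha> \<noteq> 0}. cf j \<mu> * w0 * monom \<mu> y * pdiff_multi \<alpha>0 f y)"
          unfolding Sj_def by (subst sum.reindex[OF inj]) (simp add: PW_def)
        also have "\<dots> = p j y * (w0 * pdiff_multi \<alpha>0 f y)"
          by (subst cf(2)[of j]) (simp add: sum_distrib_left ac_simps)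
        finally show ?thesis .
      qed
      define B :: "'m \<Rightarrow> 'n weyl" where
        "B = (\<lambda>j'. \<lambda>z. (if j' = j0 then PW else (\<lambda>z. 0)) z - (if j' = j then one_w else (\<lambda>z. 0)) z)"
      have Bel: "weyl_elem (B j')" for j'
        unfolding B_def by (rule weyl_elem_diff) (simp_all add: PWel weyl_elem_zero weyl_elem_single)
      have actB: "(\<Sum>j'\<in>UNIV. weyl_act (B j') (f j') y) = p j y * (w0 * pdiff_multi \<alpha>0 (f j0) y) - f j y"
        for f :: "'m \<Rightarrow> (real, 'n) vec \<Rightarrow> complex" and y
      proof -
        have "(\<Sum>j'\<in>UNIV. weyl_act (B j') (f j') y) =
           (\<Sum>j'\<in>UNIV. weyl_act (if j' = j0 then PW else (\<lambda>z. 0)) (f j') y - weyl_act (if j' = j then one_w else (\<lambda>z. 0)) (f j') y)"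
          unfolding B_def
          by (rule sum.cong[OF refl], subst weyl_act_diff_elem) (simp_all add: PWel weyl_elem_zero weyl_elem_single)
        also have "\<dots> = weyl_act PW (f j0) y - weyl_act one_w (f j) y"
          by (simp add: sum_subtractf sum_if_elem)
        finally show ?thesis by (simp add: actPW weyl_act_one)
      qed
      have "B \<in> ker_kappa p"
        unfolding ker_kappa_def
      proof (intro CollectI conjI allI ext)
        fix j' show "weyl_elem (B j')" by (rule Bel)
      next
        fix y show "(\<Sum>j'\<in>UNIV. weyl_act (B j') (p j') y) = 0"
          unfolding actB DP using w0(2) by (simp add: ac_simps)
      qed
      from fun_cong[OF kerg[OF this], of x] actB[of g x]
      show ?thesis by (simp add: Dg ac_simps)
    qed
    then have "g = (\<lambda>j x. (w0 * Cg) * p j x)" by (simp add: fun_eq_iff)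
    then show "g \<in> {(\<lambda>j x. c * p j x) | c :: complex. True}" by blast
  qed
qed

end
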